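(* Let $\Omega$ be a topological space, let $T_1,\dots,T_\gamma:\Omega\to\Omega$ be commuting homeomorphisms, write $T^n=T_1^{n_1}\cdots T_\gamma^{n_\gamma}$ for $n\in\mathbb{Z}^\gamma$, and assume the $\mathbb{Z}^\gamma$-action $n\mapsto T^n$ is minimal. Let $f:\Omega\to\mathbb{R}$ be continuous and for $\omega\in\Omega$ define $H_\omega$ on $\ell^2(\mathbb{Z}^\gamma)$ by $(H_\omega u)(n)=\sum_{|m-n|=1}u(m)+f(T^n\omega)u(n)$. If $H_{\omega}$ has uniformly localized eigenfunctions (ULE) for a single $\omega\in\Omega$, then $H_\omega$ has homogeneous ULE in $\Omega$: there exist $\alpha>0$, $C>0$ independent of $\omega$ such that for every $\omega\in\Omega$, $H_\omega$ has a complete orthonormal set of eigenfunctions $\{\phi^\omega_n\}$ and points $m^\omega_n\in\mathbb{Z}^\gamma$ with $|\phi^\omega_n(m)|\le Ce^{-\alpha|m-m^\omega_n|}$ for all $n,m$.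
   Context: Minimal means every orbit $\{T^n\omega:n\in\mathbb{Z}^\gamma\}$ is dense in $\Omega$. $|\cdot|$ denotes the norm on $\mathbb{Z}^\gamma$. A self-adjoint operator $H$ on $\ell^2(\mathbb{Z}^\gamma)$ has ULE if it has a complete orthonormal set of eigenfunctions $\{\phi_n\}$ and there exist $\alpha>0$, $C>0$ and points $m_n\in\mathbb{Z}^\gamma$ such that $|\phi_n(m)|\le Ce^{-\alpha|m-m_n|}$ for all $n,m$. *)

theory Defs
  imports "HOL-Analysis.Analysis"
begin

text \<open>Lattice points of Z^gamma are functions 'd => int with 'd a finite index type
  (gamma = CARD('d)).  The norm on Z^gamma is the l^1 norm.\<close>

definition znorm :: "('d::finite \<Rightarrow> int) \<Rightarrow> real" where
  "znorm n = (\<Sum>i\<in>UNIV. real_of_int \<bar>n i\<bar>)"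

text \<open>Integer iterate of a map (for a bijection, inv is its inverse).\<close>
definition iter_int :: "('a \<Rightarrow> 'a) \<Rightarrow> int \<Rightarrow> 'a \<Rightarrow> 'a" where
  "iter_int g k = (if 0 \<le> k then g ^^ nat k else (inv g) ^^ nat (- k))"

definition Tpow :: "('d::finite \<Rightarrow> 'a \<Rightarrow> 'a) \<Rightarrow> ('d \<Rightarrow> int) \<Rightarrow> 'a \<Rightarrow> 'a" where
  "Tpow T n = Finite_Set.fold (\<lambda>i h. iter_int (T i) (n i) \<circ> h) id UNIV"

definition minimal_action :: "('d::finite \<Rightarrow> 'a::topological_space \<Rightarrow> 'a) \<Rightarrow> bool" where
  "minimal_action T \<longleftrightarrow> (\<forall>\<omega>. closure {Tpow T n \<omega> | n. True} = UNIV)"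

definition schr_op :: "('a \<Rightarrow> real) \<Rightarrow> ('d::finite \<Rightarrow> 'a \<Rightarrow> 'a) \<Rightarrow> 'a
    \<Rightarrow> (('d \<Rightarrow> int) \<Rightarrow> complex) \<Rightarrow> ('d \<Rightarrow> int) \<Rightarrow> complex" where
  "schr_op f T \<omega> u n = (\<Sum>m\<in>{m. znorm (m - n) = 1}. u m) + complex_of_real (f (Tpow T n \<omega>)) * u n"

definition l2 :: "(('d::finite \<Rightarrow> int) \<Rightarrow> complex) \<Rightarrow> bool" where
  "l2 u \<longleftrightarrow> (\<lambda>n. (cmod (u n))\<^sup>2) summable_on UNIV"

definition l2_inner :: "(('d::finite \<Rightarrow> int) \<Rightarrow> complex) \<Rightarrow> (('d \<Rightarrow> int) \<Rightarrow> complex) \<Rightarrow> complex" where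
  "l2_inner u v = (\<Sum>\<^sub>\<infinity>n. u n * cnj (v n))"

definition complete_orthonormal :: "(('d::finite \<Rightarrow> int) \<Rightarrow> complex) set \<Rightarrow> bool" where
  "complete_orthonormal B \<longleftrightarrow>
     (\<forall>u\<in>B. l2 u) \<and>
     (\<forall>u\<in>B. \<forall>v\<in>B. l2_inner u v = (if u = v then 1 else 0)) \<and>
     (\<forall>v. l2 v \<and> (\<forall>u\<in>B. l2_inner v u = 0) \<longrightarrow> v = (\<lambda>_. 0))"

definition is_eigenfunction :: "((('d::finite \<Rightarrow> int) \<Rightarrow> complex) \<Rightarrow> ('d \<Rightarrow> int) \<Rightarrow> complex)
    \<Rightarrow> (('d \<Rightarrow> int) \<Rightarrow> complex) \<Rightarrow> bool" where
  "is_eigenfunction H u \<longleftrightarrow> l2 u \<and> u \<noteq> (\<lambda>_. 0) \<and> (\<exists>E. \<forall>n. H u n = E * u n)"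

definition ULE_with :: "real \<Rightarrow> real \<Rightarrow> ((('d::finite \<Rightarrow> int) \<Rightarrow> complex) \<Rightarrow> ('d \<Rightarrow> int) \<Rightarrow> complex) \<Rightarrow> bool" where
  "ULE_with \<alpha> C H \<longleftrightarrow>
     (\<exists>B c. complete_orthonormal B \<and> (\<forall>\<phi>\<in>B. is_eigenfunction H \<phi>) \<and>
        (\<forall>\<phi>\<in>B. \<forall>m. cmod (\<phi> m) \<le> C * exp (- \<alpha> * znorm (m - c \<phi>))))"

definition has_ULE :: "((('d::finite \<Rightarrow> int) \<Rightarrow> complex) \<Rightarrow> ('d \<Rightarrow> int) \<Rightarrow> complex) \<Rightarrow> bool" where
  "has_ULE H \<longleftrightarrow> (\<exists>\<alpha>>0. \<exists>C>0. ULE_with \<alpha> C H)"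

end

theory Submission
  imports Defs "HOL-Library.Function_Algebras"
begin


lemma summable_exp_int:
  fixes a :: real assumes a: "a > 0"
  shows "(\<lambda>k::int. exp (- a * \<bar>real_of_int k\<bar>)) summable_on UNIV"
proof -
  have g: "(\<lambda>n::nat. exp (- a * real n)) summable_on UNIV"
  proof -
    have "summable (\<lambda>n::nat. exp (- a) ^ n)" using a by (intro summable_geometric) auto
    hence "summable (\<lambda>n::nat. exp (- a * real n))"
      by (simp add: exp_of_nat_mult[symmetric] mult.commute)
    thus ?thesis by (subst summable_on_UNIV_nonneg_real_iff) auto
  qed
  have 1: "(\<lambda>k::int. exp (- a * \<bar>real_of_int k\<bar>)) summable_on (int ` UNIV)"
    by (subst summable_on_reindex) (use g in \<open>auto simp: o_def\<close>)
  have 2: "(\<lambda>k::int. exp (- a * \<bar>real_of_int k\<bar>)) summable_on ((\<lambda>n. - int n) ` UNIV)"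
    by (subst summable_on_reindex) (use g in \<open>auto simp: o_def inj_on_def\<close>)
  have "UNIV = int ` UNIV \<union> (\<lambda>n. - int n) ` UNIV"
    by (auto simp: image_iff) (metis int_cases2)
  thus ?thesis using summable_on_union[OF 1 2] by simp
qed

lemma exp_znorm_prod:
  "exp (- (a * znorm (n::'d::finite \<Rightarrow> int))) = (\<Prod>i\<in>UNIV. exp (- (a * \<bar>real_of_int (n i)\<bar>)))"
  by (simp add: znorm_def sum_distrib_left exp_sum[symmetric] sum_negf)

lemma summable_exp_znorm:
  fixes a :: real assumes a: "a > 0"
  shows "(\<lambda>n::'d::finite \<Rightarrow> int. exp (- a * znorm n)) summable_on UNIV"
proof (rule nonneg_bdd_above_summable_on)
  define S where "S = infsum (\<lambda>k::int. exp (- a * \<bar>real_of_int k\<bar>)) UNIV"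
  show "bdd_above (sum (\<lambda>n::'d::finite \<Rightarrow> int. exp (- a * znorm n)) ` {F. F \<subseteq> UNIV \<and> finite F})"
  proof (rule bdd_aboveI2)
    fix F :: "('d::finite \<Rightarrow> int) set" assume "F \<in> {F. F \<subseteq> UNIV \<and> finite F}"
    hence F: "finite F" by auto
    define G where "G = (\<Union>n\<in>F. range n)"
    have G: "finite G" unfolding G_def using F by auto
    have sub: "F \<subseteq> PiE (UNIV::'d set) (\<lambda>_. G)" unfolding G_def by (auto simp: PiE_def)
    have fin: "finite (PiE (UNIV::'d set) (\<lambda>_. G))" using G by (intro finite_PiE) auto
    have "sum (\<lambda>n. exp (- a * znorm n)) F \<le> sum (\<lambda>n. exp (- a * znorm n)) (PiE (UNIV::'d set) (\<lambda>_. G))"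
      using sum_mono2[OF fin sub, of "\<lambda>n. exp (- a * znorm n)"] by auto
    also have "\<dots> = infsum (\<lambda>g. \<Prod>i\<in>UNIV. exp (- a * \<bar>real_of_int (g i)\<bar>)) (PiE (UNIV::'d set) (\<lambda>_. G))"
      using fin by (simp add: exp_znorm_prod)
    also have "\<dots> = (\<Prod>i\<in>(UNIV::'d set). infsum (\<lambda>k. exp (- a * \<bar>real_of_int k\<bar>)) G)"
      using G by (intro infsum_prod_PiE_abs) auto
    also have "\<dots> \<le> (\<Prod>i\<in>(UNIV::'d set). S)"
    proof (intro prod_mono conjI)
      fix i show "0 \<le> infsum (\<lambda>k. exp (- a * \<bar>real_of_int k\<bar>)) G" by (intro infsum_nonneg) auto
      show "infsum (\<lambda>k. exp (- a * \<bar>real_of_int k\<bar>)) G \<le> S"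
        unfolding S_def using summable_exp_int[OF a] G
        by (intro infsum_mono_neutral) auto
    qed
    finally show "sum (\<lambda>n. exp (- a * znorm n)) F \<le> (\<Prod>i\<in>(UNIV::'d set). S)" .
  qed
qed auto




lemma has_sum_sum_fin:
  fixes f :: "'i \<Rightarrow> 'a \<Rightarrow> 'b::topological_comm_monoid_add"
  assumes "finite I" "\<And>i. i \<in> I \<Longrightarrow> (f i has_sum s i) A"
  shows "((\<lambda>x. \<Sum>i\<in>I. f i x) has_sum (\<Sum>i\<in>I. s i)) A"
  using assms by (induction I rule: finite_induct) (auto intro!: has_sum_add)

lemma has_sum_diff':
  fixes f g :: "'a \<Rightarrow> 'b::topological_ab_group_add"
  assumes "(f has_sum a) A" "(g has_sum b) A"
  shows "((\<lambda>x. f x - g x) has_sum (a - b)) A"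
  using has_sum_add[OF assms(1), of "\<lambda>x. - g x" "- b"] assms(2) by (simp add: has_sum_uminus)

lemma l2_prod_abs:
  assumes "l2 u" "l2 v"
  shows "(\<lambda>n. norm (u n * cnj (v n))) summable_on UNIV"
proof (rule Infinite_Sum.abs_summable_on_comparison_test')
  show "(\<lambda>n. (cmod (u n))\<^sup>2 + (cmod (v n))\<^sup>2) summable_on UNIV"
    using assms unfolding l2_def by (rule summable_on_add)
  fix n
  have "2 * (cmod (u n) * cmod (v n)) \<le> (cmod (u n))\<^sup>2 + (cmod (v n))\<^sup>2"
    using sum_squares_bound[of "cmod (u n)" "cmod (v n)"] by (simp add: mult.assoc)
  moreover have "0 \<le> cmod (u n) * cmod (v n)" by simp
  ultimately have "cmod (u n) * cmod (v n) \<le> (cmod (u n))\<^sup>2 + (cmod (v n))\<^sup>2" by linarith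
  thus "norm (u n * cnj (v n)) \<le> (cmod (u n))\<^sup>2 + (cmod (v n))\<^sup>2"
    by (simp add: norm_mult)
qed

lemma l2_prod_summable:
  assumes "l2 u" "l2 v"
  shows "(\<lambda>n. u n * cnj (v n)) summable_on UNIV"
  using abs_summable_summable[OF l2_prod_abs[OF assms]] .

lemma l2_prod_bound:
  assumes "l2 u" "l2 v"
  shows "infsum (\<lambda>n. cmod (u n) * cmod (v n)) UNIV \<le>
     (infsum (\<lambda>n. (cmod (u n))\<^sup>2) UNIV + infsum (\<lambda>n. (cmod (v n))\<^sup>2) UNIV) * (1/2)"
proof -
  have s: "(\<lambda>n. cmod (u n) * cmod (v n)) summable_on UNIV"
    using l2_prod_abs[OF assms] by (simp add: norm_mult)
  have "infsum (\<lambda>n. cmod (u n) * cmod (v n)) UNIV \<le>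
        infsum (\<lambda>n. ((cmod (u n))\<^sup>2 + (cmod (v n))\<^sup>2) * (1/2)) UNIV"
    using assms s unfolding l2_def
  proof (intro infsum_mono summable_on_cmult_left summable_on_add)
    fix n
    show "cmod (u n) * cmod (v n) \<le> ((cmod (u n))\<^sup>2 + (cmod (v n))\<^sup>2) * (1/2)"
      using sum_squares_bound[of "cmod (u n)" "cmod (v n)"] by simp
  qed (use assms s in \<open>auto simp: l2_def\<close>)
  also have "\<dots> = infsum (\<lambda>n. ((cmod (u n))\<^sup>2 + (cmod (v n))\<^sup>2)) UNIV * (1/2)"
    by (rule infsum_cmult_left) (use assms in \<open>auto simp: l2_def intro: summable_on_add\<close>)
  also have "infsum (\<lambda>n. ((cmod (u n))\<^sup>2 + (cmod (v n))\<^sup>2)) UNIV =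
     infsum (\<lambda>n. (cmod (u n))\<^sup>2) UNIV + infsum (\<lambda>n. (cmod (v n))\<^sup>2) UNIV"
    by (rule infsum_add) (use assms in \<open>auto simp: l2_def\<close>)
  finally show ?thesis .
qed

lemma l2_diff:
  assumes "l2 u" "l2 v"
  shows "l2 (\<lambda>n. u n - v n)"
  unfolding l2_def
proof (rule summable_on_comparison_test)
  show "(\<lambda>n. 2 * (cmod (u n))\<^sup>2 + 2 * (cmod (v n))\<^sup>2) summable_on UNIV"
    using assms unfolding l2_def by (intro summable_on_add summable_on_cmult_right)
  fix n
  have "cmod (u n - v n) \<le> cmod (u n) + cmod (v n)" by (rule norm_triangle_ineq4)
  hence "(cmod (u n - v n))\<^sup>2 \<le> (cmod (u n) + cmod (v n))\<^sup>2"
    by (intro power_mono) auto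
  also have "\<dots> \<le> 2 * (cmod (u n))\<^sup>2 + 2 * (cmod (v n))\<^sup>2"
    using sum_squares_bound[of "cmod (u n)" "cmod (v n)"] by (simp add: power2_sum)
  finally show "(cmod (u n - v n))\<^sup>2 \<le> 2 * (cmod (u n))\<^sup>2 + 2 * (cmod (v n))\<^sup>2" .
qed auto

lemma l2_inner_diff:
  assumes "l2 u" "l2 v" "l2 w"
  shows "l2_inner (\<lambda>n. u n - v n) w = l2_inner u w - l2_inner v w"
proof -
  have "((\<lambda>n. u n * cnj (w n) - v n * cnj (w n)) has_sum (l2_inner u w - l2_inner v w)) UNIV"
    unfolding l2_inner_def
    by (intro has_sum_diff' has_sum_infsum l2_prod_summable assms)
  thus ?thesis unfolding l2_inner_def by (simp add: infsumI algebra_simps)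
qed

lemma l2_inner_cnj: "l2_inner u v = cnj (l2_inner v u)"
proof -
  have "cnj (l2_inner v u) = infsum (\<lambda>n. cnj (v n * cnj (u n))) UNIV"
    unfolding l2_inner_def by (rule infsum_cnj[symmetric])
  also have "\<dots> = l2_inner u v"
    unfolding l2_inner_def by (simp add: mult.commute)
  finally show ?thesis by simp
qed

definition delta :: "('d::finite \<Rightarrow> int) \<Rightarrow> ('d \<Rightarrow> int) \<Rightarrow> complex" where
  "delta m n = (if n = m then 1 else 0)"

lemma has_sum_single:
  fixes c :: "'b::{t2_space, topological_comm_monoid_add}"
  shows "((\<lambda>n. if n = m then c else 0) has_sum c) A \<longleftrightarrow> m \<in> A \<or> c = 0"
proof (cases "m \<in> A")
  case True
  have "((\<lambda>n. if n = m then c else 0) has_sum c) A"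
    by (rule has_sum_finite_neutralI[of "{m}"]) (use True in auto)
  thus ?thesis using True by simp
next
  case False
  hence "((\<lambda>n. if n = m then c else 0) has_sum 0) A"
    by (intro has_sum_finite_neutralI[of "{}"]) auto
  show ?thesis
  proof
    assume "((\<lambda>n. if n = m then c else 0) has_sum c) A"
    with \<open>((\<lambda>n. if n = m then c else 0) has_sum 0) A\<close> have "0 = c" by (rule has_sum_unique)
    thus "m \<in> A \<or> c = 0" by simp
  next
    assume "m \<in> A \<or> c = 0"
    with False have "c = 0" by simp
    with \<open>((\<lambda>n. if n = m then c else 0) has_sum 0) A\<close> show "((\<lambda>n. if n = m then c else 0) has_sum c) A" by simp
  qed
qed

lemma infsum_single: fixes c :: "'b::{t2_space, topological_comm_monoid_add}" shows "infsum (\<lambda>n. if n = m then c else 0) UNIV = c"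
  by (intro infsumI) (simp add: has_sum_single)

lemma l2_delta: "l2 (delta m)"
proof -
  have e: "(\<lambda>n. (cmod (delta m n))\<^sup>2) = (\<lambda>n. if n = m then 1 else 0)"
    by (auto simp: delta_def)
  have "((\<lambda>n. (cmod (delta m n))\<^sup>2) has_sum 1) UNIV"
    unfolding e using has_sum_single[of m "1::real" UNIV] by simp
  thus ?thesis unfolding l2_def by (rule has_sum_imp_summable)
qed

lemma l2_inner_delta: "l2_inner (delta m) v = cnj (v m)"
proof -
  have e: "(\<lambda>n. delta m n * cnj (v n)) = (\<lambda>n. if n = m then cnj (v m) else 0)"
    by (auto simp: delta_def)
  show ?thesis unfolding l2_inner_def e by (rule infsum_single)
qed

lemma mult_cnj_cmod: "z * cnj z = of_real ((cmod z)\<^sup>2)"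
  by (simp add: complex_mult_cnj cmod_power2)

lemma l2_inner_self: assumes "l2 u" shows "l2_inner u u = of_real (infsum (\<lambda>n. (cmod (u n))\<^sup>2) UNIV)"
proof -
  have "l2_inner u u = infsum (\<lambda>n. of_real ((cmod (u n))\<^sup>2)) UNIV"
    unfolding l2_inner_def by (simp add: mult_cnj_cmod)
  also have "\<dots> = of_real (infsum (\<lambda>n. (cmod (u n))\<^sup>2) UNIV)"
    by (rule infsumI, rule has_sum_of_real_iff[THEN iffD2, OF has_sum_infsum])
       (use assms in \<open>simp add: l2_def\<close>)
  finally show ?thesis .
qed

lemma l2_point_le:
  assumes "l2 u"
  shows "(cmod (u m))\<^sup>2 \<le> infsum (\<lambda>n. (cmod (u n))\<^sup>2) UNIV"
proof -
  have "infsum (\<lambda>n. (cmod (u n))\<^sup>2) {m} \<le> infsum (\<lambda>n. (cmod (u n))\<^sup>2) UNIV"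
    using assms unfolding l2_def by (intro infsum_mono_neutral) auto
  thus ?thesis by simp
qed




lemma tail_small:
  fixes g :: "'i \<Rightarrow> real"
  assumes g: "g summable_on UNIV" and e: "e > 0"
  shows "\<exists>F. finite F \<and> infsum g (UNIV - F) < e"
proof -
  have "(sum g \<longlongrightarrow> infsum g UNIV) (finite_subsets_at_top UNIV)"
    using infsum_tendsto[OF g] .
  hence "eventually (\<lambda>F. dist (sum g F) (infsum g UNIV) < e) (finite_subsets_at_top UNIV)"
    using e by (rule tendstoD)
  then obtain X where X: "finite X" "\<forall>Y. finite Y \<and> X \<subseteq> Y \<and> Y \<subseteq> UNIV \<longrightarrow> dist (sum g Y) (infsum g UNIV) < e"
    unfolding eventually_finite_subsets_at_top by blast
  have "infsum g (UNIV - X) = infsum g UNIV - infsum g X"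
    by (rule infsum_Diff) (use g X in auto)
  also have "\<dots> = infsum g UNIV - sum g X" using X by simp
  also have "\<dots> < e" using X(2)[rule_format, of X] X(1) by (simp add: dist_real_def)
  finally show ?thesis using X by blast
qed

lemma lim_norm_le:
  fixes f :: "nat \<Rightarrow> 'a::real_normed_vector"
  assumes "f \<longlonglongrightarrow> L" "\<And>k. norm (f k) \<le> b"
  shows "norm L \<le> b"
  using tendsto_norm[OF assms(1)] by (rule LIMSEQ_le_const2) (use assms(2) in auto)

lemma dom_conv:
  fixes f :: "nat \<Rightarrow> 'i \<Rightarrow> complex" and h :: "'i \<Rightarrow> complex" and g :: "'i \<Rightarrow> real"
  assumes g: "g summable_on UNIV" and b: "\<And>k i. cmod (f k i) \<le> g i"
    and c: "\<And>i. (\<lambda>k. f k i) \<longlonglongrightarrow> h i"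
  shows "(\<lambda>k. infsum (f k) UNIV) \<longlonglongrightarrow> infsum h UNIV"
proof -
  have hb: "cmod (h i) \<le> g i" for i by (rule lim_norm_le[OF c b])
  have gn: "0 \<le> g i" for i by (rule order_trans[OF norm_ge_zero b])
  have nf: "(\<lambda>i. cmod (f k i)) summable_on A" for k A
    by (rule summable_on_subset_banach[of _ UNIV])
       (auto intro!: summable_on_comparison_test[OF g] b)
  have nh: "(\<lambda>i. cmod (h i)) summable_on A" for A
    by (rule summable_on_subset_banach[of _ UNIV])
       (auto intro!: summable_on_comparison_test[OF g] hb)
  have sf: "f k summable_on A" for k A by (rule abs_summable_summable[OF nf])
  have sh: "h summable_on A" for A by (rule abs_summable_summable[OF nh])
  have gs: "g summable_on A" for A by (rule summable_on_subset_banach[OF g]) auto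
  show ?thesis
  proof (rule metric_LIMSEQ_I)
    fix r :: real assume r: "r > 0"
    obtain F where F: "finite F" "infsum g (UNIV - F) < r/3"
      using tail_small[OF g, of "r/3"] r by auto
    have "(\<lambda>k. \<Sum>i\<in>F. f k i) \<longlonglongrightarrow> (\<Sum>i\<in>F. h i)"
      by (intro tendsto_sum c)
    then obtain no where no: "\<And>k. k \<ge> no \<Longrightarrow> dist (\<Sum>i\<in>F. f k i) (\<Sum>i\<in>F. h i) < r/3"
      using r unfolding lim_sequentially by (metis divide_pos_pos zero_less_numeral)
    have tl: "cmod (infsum q (UNIV - F)) \<le> infsum g (UNIV - F)"
      if "\<And>i. cmod (q i) \<le> g i" "(\<lambda>i. cmod (q i)) summable_on (UNIV - F)" for q
    proof -
      have "cmod (infsum q (UNIV - F)) \<le> infsum (\<lambda>i. cmod (q i)) (UNIV - F)"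
        by (rule norm_infsum_bound) (use that in simp)
      also have "\<dots> \<le> infsum g (UNIV - F)"
        by (rule infsum_mono) (use that gs in auto)
      finally show ?thesis .
    qed
    show "\<exists>no. \<forall>k\<ge>no. dist (infsum (f k) UNIV) (infsum h UNIV) < r"
    proof (intro exI allI impI)
      fix k assume k: "k \<ge> no"
      have d1: "infsum (f k) UNIV = (\<Sum>i\<in>F. f k i) + infsum (f k) (UNIV - F)"
      proof -
        have "infsum (f k) (UNIV - F) = infsum (f k) UNIV - infsum (f k) F"
          by (rule infsum_Diff) (auto intro: sf)
        thus ?thesis using F by simp
      qed
      have d2: "infsum h UNIV = (\<Sum>i\<in>F. h i) + infsum h (UNIV - F)"
      proof -
        have "infsum h (UNIV - F) = infsum h UNIV - infsum h F"
          by (rule infsum_Diff) (auto intro: sh)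
        thus ?thesis using F by simp
      qed
      have "dist (infsum (f k) UNIV) (infsum h UNIV) =
            cmod (((\<Sum>i\<in>F. f k i) - (\<Sum>i\<in>F. h i)) + (infsum (f k) (UNIV - F) - infsum h (UNIV - F)))"
        unfolding d1 d2 dist_norm by (simp add: algebra_simps)
      also have "\<dots> \<le> cmod ((\<Sum>i\<in>F. f k i) - (\<Sum>i\<in>F. h i)) + cmod (infsum (f k) (UNIV - F)) + cmod (infsum h (UNIV - F))"
        by (smt (verit) norm_triangle_ineq norm_triangle_ineq4)
      also have "\<dots> < r/3 + r/3 + r/3"
        using no[OF k] tl[of "f k"] tl[of h] b hb nf nh F(2) by (simp add: dist_norm)
      finally show "dist (infsum (f k) UNIV) (infsum h UNIV) < r" by simp
    qed
  qed
qed




definition Pf :: "('i \<Rightarrow> ('d::finite \<Rightarrow> int) \<Rightarrow> complex) \<Rightarrow> ('d \<Rightarrow> int) \<Rightarrow> ('d \<Rightarrow> int) \<Rightarrow> complex" where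
  "Pf \<psi> m n = (\<Sum>\<^sub>\<infinity>i. cnj (\<psi> i m) * \<psi> i n)"

definition goodfam :: "('i \<Rightarrow> ('d::finite \<Rightarrow> int) \<Rightarrow> complex) \<Rightarrow> real \<Rightarrow> bool" where
  "goodfam \<psi> K \<longleftrightarrow> (\<forall>i. l2 (\<psi> i)) \<and>
     (\<forall>i j. l2_inner (\<psi> i) (\<psi> j) = (if i = j \<and> \<psi> i \<noteq> (\<lambda>_. 0) then 1 else 0)) \<and>
     (\<forall>m. (\<lambda>i. cmod (\<psi> i m)) summable_on UNIV) \<and>
     (\<forall>i. (\<lambda>n. cmod (\<psi> i n)) summable_on UNIV \<and> infsum (\<lambda>n. cmod (\<psi> i n)) UNIV \<le> K)"

lemma goodfam_norm_le1:
  assumes "goodfam \<psi> K"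
  shows "infsum (\<lambda>n. (cmod (\<psi> i n))\<^sup>2) UNIV \<le> 1"
proof -
  have l2i: "l2 (\<psi> i)" using assms by (simp add: goodfam_def)
  have "of_real (infsum (\<lambda>n. (cmod (\<psi> i n))\<^sup>2) UNIV) = l2_inner (\<psi> i) (\<psi> i)"
    by (rule l2_inner_self[OF l2i, symmetric])
  also have "\<dots> = (if \<psi> i \<noteq> (\<lambda>_. 0) then 1 else 0)" using assms by (simp add: goodfam_def)
  finally have "infsum (\<lambda>n. (cmod (\<psi> i n))\<^sup>2) UNIV = (if \<psi> i \<noteq> (\<lambda>_. 0) then 1 else 0)"
    by (metis (mono_tags) of_real_0 of_real_1 of_real_eq_iff)
  thus ?thesis by simp
qed

lemma goodfam_pt_le1:
  assumes "goodfam \<psi> K"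
  shows "cmod (\<psi> i n) \<le> 1"
proof -
  have "(cmod (\<psi> i n))\<^sup>2 \<le> 1"
    using l2_point_le[of "\<psi> i" n] assms goodfam_norm_le1[OF assms, of i]
    by (auto simp: goodfam_def)
  thus ?thesis by (simp add: power_le_one_iff abs_le_square_iff)
qed

lemma goodfam_terms_summable:
  assumes gf: "goodfam \<psi> K"
  shows "(\<lambda>i. cmod (cnj (\<psi> i m) * \<psi> i n)) summable_on UNIV"
proof (rule summable_on_comparison_test)
  show "(\<lambda>i. cmod (\<psi> i m)) summable_on UNIV" using gf by (simp add: goodfam_def)
  fix i show "cmod (cnj (\<psi> i m) * \<psi> i n) \<le> cmod (\<psi> i m)"
    using goodfam_pt_le1[OF gf, of i n] by (simp add: norm_mult mult_left_le)
qed auto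

lemma swap_lemma:
  fixes \<psi> :: "'i \<Rightarrow> ('d::finite \<Rightarrow> int) \<Rightarrow> complex"
  assumes gf: "goodfam \<psi> K" and u: "l2 u"
  shows "l2_inner u (Pf \<psi> m) = (\<Sum>\<^sub>\<infinity>i. \<psi> i m * l2_inner u (\<psi> i))"
proof -
  define G where "G = (\<lambda>n (i::'i). u n * (\<psi> i m * cnj (\<psi> i n)))"
  have l2i: "l2 (\<psi> i)" for i using gf by (simp add: goodfam_def)
  define M where "M = (infsum (\<lambda>n. (cmod (u n))\<^sup>2) UNIV + 1) / 2"
  have pb: "infsum (\<lambda>n. cmod (u n) * cmod (\<psi> i n)) UNIV \<le> M" for i
  proof -
    have "infsum (\<lambda>n. cmod (u n) * cmod (\<psi> i n)) UNIV \<le>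
       (infsum (\<lambda>n. (cmod (u n))\<^sup>2) UNIV + infsum (\<lambda>n. (cmod (\<psi> i n))\<^sup>2) UNIV) * (1/2)"
      by (rule l2_prod_bound[OF u l2i])
    also have "\<dots> \<le> M" unfolding M_def using goodfam_norm_le1[OF gf, of i] by simp
    finally show ?thesis .
  qed
  have ps: "(\<lambda>n. cmod (u n) * cmod (\<psi> i n)) summable_on UNIV" for i
    using l2_prod_abs[OF u l2i] by (simp add: norm_mult)
  have hs: "((\<lambda>n. norm (G n i)) has_sum (cmod (\<psi> i m) * infsum (\<lambda>n. cmod (u n) * cmod (\<psi> i n)) UNIV)) UNIV" for i
    unfolding G_def using has_sum_cmult_right[OF has_sum_infsum[OF ps[of i]], of "cmod (\<psi> i m)"]
    by (simp add: norm_mult mult_ac)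
  have gs: "(\<lambda>i. cmod (\<psi> i m) * infsum (\<lambda>n. cmod (u n) * cmod (\<psi> i n)) UNIV) summable_on UNIV"
  proof (rule summable_on_comparison_test)
    show "(\<lambda>i. cmod (\<psi> i m) * M) summable_on UNIV"
      using gf by (intro summable_on_cmult_left) (simp add: goodfam_def)
    fix i show "cmod (\<psi> i m) * infsum (\<lambda>n. cmod (u n) * cmod (\<psi> i n)) UNIV \<le> cmod (\<psi> i m) * M"
      by (intro mult_left_mono pb) auto
    show "0 \<le> cmod (\<psi> i m) * infsum (\<lambda>n. cmod (u n) * cmod (\<psi> i n)) UNIV"
      by (intro mult_nonneg_nonneg infsum_nonneg) auto
  qed
  have abs: "(\<lambda>(i, n). norm (G n i)) summable_on (Sigma UNIV (\<lambda>_. UNIV))"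
    apply (rule summable_on_SigmaI[where g = "\<lambda>i. cmod (\<psi> i m) * infsum (\<lambda>n. cmod (u n) * cmod (\<psi> i n)) UNIV"])
    subgoal for i using hs[of i] by simp
    subgoal by (rule gs)
    subgoal by simp
    done
  have sm1: "(\<lambda>(i, n). G n i) summable_on (UNIV \<times> UNIV)"
  proof (rule abs_summable_summable)
    have "(\<lambda>x. norm ((\<lambda>(i, n). G n i) x)) = (\<lambda>(i, n). norm (G n i))" by auto
    thus "(\<lambda>x. norm ((\<lambda>(i, n). G n i) x)) summable_on (UNIV \<times> UNIV)" using abs by simp
  qed
  have sm2: "(\<lambda>(n, i). G n i) summable_on (UNIV \<times> UNIV)"
  proof -
    have "(\<lambda>(x, y). (\<lambda>(i, n). G n i) (y, x)) = (\<lambda>(n, i). G n i)" by auto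
    thus ?thesis using sm1 summable_on_swap[of "\<lambda>(i, n). G n i" UNIV UNIV] by simp
  qed
  have "l2_inner u (Pf \<psi> m) = (\<Sum>\<^sub>\<infinity>n. u n * cnj (\<Sum>\<^sub>\<infinity>i. cnj (\<psi> i m) * \<psi> i n))"
    unfolding l2_inner_def Pf_def ..
  also have "\<dots> = (\<Sum>\<^sub>\<infinity>n. \<Sum>\<^sub>\<infinity>i. G n i)"
  proof (rule infsum_cong)
    fix n
    have "u n * cnj (\<Sum>\<^sub>\<infinity>i. cnj (\<psi> i m) * \<psi> i n) = u n * (\<Sum>\<^sub>\<infinity>i. cnj (cnj (\<psi> i m) * \<psi> i n))"
      by (simp only: infsum_cnj)
    also have "\<dots> = (\<Sum>\<^sub>\<infinity>i. u n * cnj (cnj (\<psi> i m) * \<psi> i n))"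
      by (rule infsum_cmult_right'[symmetric])
    also have "\<dots> = (\<Sum>\<^sub>\<infinity>i. G n i)" unfolding G_def by simp
    finally show "u n * cnj (\<Sum>\<^sub>\<infinity>i. cnj (\<psi> i m) * \<psi> i n) = (\<Sum>\<^sub>\<infinity>i. G n i)" .
  qed
  also have "\<dots> = (\<Sum>\<^sub>\<infinity>i. \<Sum>\<^sub>\<infinity>n. G n i)"
    by (rule infsum_swap_banach[OF sm2])
  also have "\<dots> = (\<Sum>\<^sub>\<infinity>i. \<psi> i m * l2_inner u (\<psi> i))"
  proof (rule infsum_cong)
    fix i
    have "(\<Sum>\<^sub>\<infinity>n. G n i) = (\<Sum>\<^sub>\<infinity>n. \<psi> i m * (u n * cnj (\<psi> i n)))"
      unfolding G_def by (simp add: mult_ac)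
    also have "\<dots> = \<psi> i m * l2_inner u (\<psi> i)"
      unfolding l2_inner_def by (rule infsum_cmult_right')
    finally show "(\<Sum>\<^sub>\<infinity>n. G n i) = \<psi> i m * l2_inner u (\<psi> i)" .
  qed
  finally show ?thesis .
qed

lemma goodfam_inner_same:
  assumes gf: "goodfam \<psi> K" and nz: "\<psi> i \<noteq> (\<lambda>_. 0)"
  shows "l2_inner (\<psi> i) (\<psi> j) = (if j = i then 1 else 0)"
  using gf nz by (auto simp: goodfam_def)

lemma l2_inner_zero_right: "l2_inner u (\<lambda>_. 0) = 0"
  by (simp add: l2_inner_def)

lemma Pf_l2:
  fixes \<psi> :: "'i \<Rightarrow> ('d::finite \<Rightarrow> int) \<Rightarrow> complex"
  assumes gf: "goodfam \<psi> K"
  shows "l2 (Pf \<psi> m)"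
proof -
  have sm: "(\<lambda>i. cmod (\<psi> i m)) summable_on UNIV" using gf by (simp add: goodfam_def)
  define A where "A = infsum (\<lambda>i. cmod (\<psi> i m)) UNIV"
  define Q where "Q = (\<lambda>n. infsum (\<lambda>i. cmod (\<psi> i m) * cmod (\<psi> i n)) UNIV)"
  have l1: "(\<lambda>n. cmod (\<psi> i n)) summable_on UNIV" "infsum (\<lambda>n. cmod (\<psi> i n)) UNIV \<le> K" for i
    using gf by (auto simp: goodfam_def)
  have ts: "(\<lambda>i. cmod (\<psi> i m) * cmod (\<psi> i n)) summable_on UNIV" for n
    using goodfam_terms_summable[OF gf, of m n] by (simp add: norm_mult)
  have PQ: "cmod (Pf \<psi> m n) \<le> Q n" for n
  proof -
    have "cmod (Pf \<psi> m n) \<le> infsum (\<lambda>i. cmod (cnj (\<psi> i m) * \<psi> i n)) UNIV"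
      unfolding Pf_def by (rule norm_infsum_bound) (use goodfam_terms_summable[OF gf] in simp)
    thus ?thesis unfolding Q_def by (simp add: norm_mult)
  qed
  have QA: "Q n \<le> A" for n
    unfolding Q_def A_def
    by (rule infsum_mono[OF ts sm]) (use goodfam_pt_le1[OF gf] in \<open>simp add: mult_left_le\<close>)
  have Q0: "0 \<le> Q n" for n unfolding Q_def by (intro infsum_nonneg) auto
  have hs: "((\<lambda>n. cmod (\<psi> i m) * cmod (\<psi> i n)) has_sum (cmod (\<psi> i m) * infsum (\<lambda>n. cmod (\<psi> i n)) UNIV)) UNIV" for i
    by (rule has_sum_cmult_right[OF has_sum_infsum[OF l1(1)]])
  have gs: "(\<lambda>i. cmod (\<psi> i m) * infsum (\<lambda>n. cmod (\<psi> i n)) UNIV) summable_on UNIV"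
  proof (rule summable_on_comparison_test)
    show "(\<lambda>i. cmod (\<psi> i m) * K) summable_on UNIV"
      using sm by (intro summable_on_cmult_left)
    fix i show "cmod (\<psi> i m) * infsum (\<lambda>n. cmod (\<psi> i n)) UNIV \<le> cmod (\<psi> i m) * K"
      by (intro mult_left_mono l1(2)) auto
    show "0 \<le> cmod (\<psi> i m) * infsum (\<lambda>n. cmod (\<psi> i n)) UNIV"
      by (intro mult_nonneg_nonneg infsum_nonneg) auto
  qed
  have sig: "(\<lambda>(i, n). cmod (\<psi> i m) * cmod (\<psi> i n)) summable_on (Sigma UNIV (\<lambda>_. UNIV))"
    apply (rule summable_on_SigmaI[where g = "\<lambda>i. cmod (\<psi> i m) * infsum (\<lambda>n. cmod (\<psi> i n)) UNIV"])
    subgoal for i using hs[of i] by simp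
    subgoal by (rule gs)
    subgoal by simp
    done
  have sig2: "(\<lambda>(n, i). cmod (\<psi> i m) * cmod (\<psi> i n)) summable_on (UNIV \<times> UNIV)"
  proof -
    have "(\<lambda>(x, y). (\<lambda>(i, n). cmod (\<psi> i m) * cmod (\<psi> i n)) (y, x)) = (\<lambda>(n, i). cmod (\<psi> i m) * cmod (\<psi> i n))" by auto
    thus ?thesis using sig summable_on_swap[of "\<lambda>(i, n). cmod (\<psi> i m) * cmod (\<psi> i n)" UNIV UNIV] by simp
  qed
  have Qs: "Q summable_on UNIV"
    unfolding Q_def using summable_on_Sigma_banach[of "\<lambda>n i. cmod (\<psi> i m) * cmod (\<psi> i n)" UNIV "\<lambda>_. UNIV"] sig2
    by simp
  show ?thesis unfolding l2_def
  proof (rule summable_on_comparison_test)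
    show "(\<lambda>n. A * Q n) summable_on UNIV" by (intro summable_on_cmult_right Qs)
    fix n
    have "(cmod (Pf \<psi> m n))\<^sup>2 \<le> (Q n)\<^sup>2" using PQ[of n] by (intro power_mono) auto
    also have "\<dots> \<le> A * Q n" using QA[of n] Q0[of n] by (simp add: power2_eq_square mult_right_mono)
    finally show "(cmod (Pf \<psi> m n))\<^sup>2 \<le> A * Q n" .
  qed auto
qed

lemma G1:
  fixes \<psi> :: "'i \<Rightarrow> ('d::finite \<Rightarrow> int) \<Rightarrow> complex"
  assumes gf: "goodfam \<psi> K" and co: "complete_orthonormal {\<psi> i | i. \<psi> i \<noteq> (\<lambda>_. 0)}"
  shows "Pf \<psi> m = delta m"
proof -
  define v where "v = (\<lambda>n. delta m n - Pf \<psi> m n)"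
  have l2v: "l2 v" unfolding v_def by (intro l2_diff l2_delta Pf_l2[OF gf])
  have l2i: "l2 (\<psi> i)" for i using gf by (simp add: goodfam_def)
  have orth: "l2_inner v u = 0" if "u \<in> {\<psi> i | i. \<psi> i \<noteq> (\<lambda>_. 0)}" for u
  proof -
    from that obtain i where i: "u = \<psi> i" "\<psi> i \<noteq> (\<lambda>_. 0)" by blast
    have "l2_inner (Pf \<psi> m) (\<psi> i) = cnj (l2_inner (\<psi> i) (Pf \<psi> m))" by (rule l2_inner_cnj)
    also have "l2_inner (\<psi> i) (Pf \<psi> m) = (\<Sum>\<^sub>\<infinity>j. \<psi> j m * l2_inner (\<psi> i) (\<psi> j))"
      by (rule swap_lemma[OF gf l2i])
    also have "\<dots> = (\<Sum>\<^sub>\<infinity>j. if j = i then \<psi> i m else 0)"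
      by (rule infsum_cong) (simp add: goodfam_inner_same[OF gf i(2)])
    also have "\<dots> = \<psi> i m" by (rule infsum_single)
    finally have "l2_inner (Pf \<psi> m) (\<psi> i) = cnj (\<psi> i m)" .
    thus ?thesis unfolding v_def i(1)
      by (subst l2_inner_diff) (auto simp: l2_delta Pf_l2[OF gf] l2i l2_inner_delta)
  qed
  have "v = (\<lambda>_. 0)" using co l2v orth unfolding complete_orthonormal_def by blast
  thus ?thesis unfolding v_def by (auto simp: fun_eq_iff dest: fun_cong)
qed

lemma G2:
  fixes \<psi> :: "'i \<Rightarrow> ('d::finite \<Rightarrow> int) \<Rightarrow> complex"
  assumes gf: "goodfam \<psi> K" and P: "\<And>m. Pf \<psi> m = delta m"
  shows "complete_orthonormal {\<psi> i | i. \<psi> i \<noteq> (\<lambda>_. 0)}"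
  unfolding complete_orthonormal_def
proof (intro conjI ballI allI impI)
  fix u assume "u \<in> {\<psi> i | i. \<psi> i \<noteq> (\<lambda>_. 0)}"
  thus "l2 u" using gf by (auto simp: goodfam_def)
next
  fix u v assume u: "u \<in> {\<psi> i | i. \<psi> i \<noteq> (\<lambda>_. 0)}" and v: "v \<in> {\<psi> i | i. \<psi> i \<noteq> (\<lambda>_. 0)}"
  then obtain i j where ij: "u = \<psi> i" "\<psi> i \<noteq> (\<lambda>_. 0)" "v = \<psi> j" "\<psi> j \<noteq> (\<lambda>_. 0)" by auto
  show "l2_inner u v = (if u = v then 1 else 0)"
  proof (cases "i = j")
    case True thus ?thesis using ij goodfam_inner_same[OF gf ij(2), of j] by simp
  next
    case False
    have z: "l2_inner (\<psi> i) (\<psi> j) = 0" using goodfam_inner_same[OF gf ij(2), of j] False by simp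
    moreover have "l2_inner (\<psi> i) (\<psi> i) = 1" using goodfam_inner_same[OF gf ij(2), of i] by simp
    ultimately have "\<psi> i \<noteq> \<psi> j" by auto
    thus ?thesis using ij z by simp
  qed
next
  fix v assume "l2 v \<and> (\<forall>u\<in>{\<psi> i | i. \<psi> i \<noteq> (\<lambda>_. 0)}. l2_inner v u = 0)"
  hence l2v: "l2 v" and o: "\<And>i. \<psi> i \<noteq> (\<lambda>_. 0) \<Longrightarrow> l2_inner v (\<psi> i) = 0" by auto
  have o2: "l2_inner v (\<psi> i) = 0" for i
    using o[of i] by (cases "\<psi> i = (\<lambda>_. 0)") (auto simp: l2_inner_zero_right)
  show "v = (\<lambda>_. 0)"
  proof
    fix m
    have "v m = cnj (l2_inner (delta m) v)" by (simp add: l2_inner_delta)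
    also have "\<dots> = l2_inner v (delta m)" by (simp add: l2_inner_cnj[of v])
    also have "\<dots> = l2_inner v (Pf \<psi> m)" by (simp add: P)
    also have "\<dots> = (\<Sum>\<^sub>\<infinity>i. \<psi> i m * l2_inner v (\<psi> i))" by (rule swap_lemma[OF gf l2v])
    also have "\<dots> = 0" by (simp add: o2)
    finally show "v m = 0" .
  qed
qed




definition ew :: "real \<Rightarrow> ('d::finite \<Rightarrow> int) \<Rightarrow> real" where
  "ew a n = exp (- a * znorm n)"

lemma znorm_nonneg: "0 \<le> znorm n"
  unfolding znorm_def by (intro sum_nonneg) auto

lemma znorm_commute: "znorm (n - z) = znorm (z - n)"
  unfolding znorm_def by (intro sum.cong) auto

lemma ew_pos: "0 < ew a n" unfolding ew_def by simp

lemma ew_le1: "0 \<le> a \<Longrightarrow> ew a n \<le> 1"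
  unfolding ew_def using znorm_nonneg[of n] by (simp add: mult_nonneg_nonneg)

lemma ew_summable: "0 < a \<Longrightarrow> ew a summable_on UNIV"
  unfolding ew_def using summable_exp_znorm by simp

lemma bij_shift: "bij_betw (\<lambda>n::'d::finite \<Rightarrow> int. n - z) UNIV UNIV"
  by (rule bij_betwI[of _ _ _ "\<lambda>n. n + z"]) auto

lemma bij_shift': "bij_betw (\<lambda>n::'d::finite \<Rightarrow> int. n + z) UNIV UNIV"
  by (rule bij_betwI[of _ _ _ "\<lambda>n. n - z"]) auto

lemma shift_summable_iff:
  "(\<lambda>n. g (n - z)) summable_on UNIV \<longleftrightarrow> g summable_on (UNIV :: ('d::finite \<Rightarrow> int) set)"
  by (rule summable_on_reindex_bij_betw[OF bij_shift])

lemma shift_infsum: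
  "infsum (\<lambda>n. g (n - z)) UNIV = infsum g (UNIV :: ('d::finite \<Rightarrow> int) set)"
  by (rule infsum_reindex_bij_betw[OF bij_shift])

lemma ew_shift_summable: "0 < a \<Longrightarrow> (\<lambda>n. ew a (n - z)) summable_on UNIV"
  using shift_summable_iff ew_summable by blast

lemma ew_shift_summable': "0 < a \<Longrightarrow> (\<lambda>n. ew a (z - n)) summable_on UNIV"
  using ew_shift_summable[of a z] by (simp add: ew_def znorm_commute)

definition decfam :: "real \<Rightarrow> real \<Rightarrow> nat \<Rightarrow> (('d::finite \<Rightarrow> int) \<times> nat \<Rightarrow> ('d \<Rightarrow> int) \<Rightarrow> complex) \<Rightarrow> bool" where
  "decfam a C N \<psi> \<longleftrightarrow> (\<forall>z j n. cmod (\<psi> (z, j) n) \<le> C * ew a (n - z)) \<and> (\<forall>z j. N \<le> j \<longrightarrow> \<psi> (z, j) = (\<lambda>_. 0))"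

definition gdom :: "real \<Rightarrow> real \<Rightarrow> nat \<Rightarrow> ('d::finite \<Rightarrow> int) \<Rightarrow> ('d \<Rightarrow> int) \<times> nat \<Rightarrow> real" where
  "gdom a C N m l = (if snd l < N then C * ew a (m - fst l) else 0)"

lemma has_sum_below:
  "((\<lambda>j::nat. if j < N then c else 0) has_sum (of_nat N * c)) UNIV"
  by (rule has_sum_finite_neutralI[of "{..<N}"]) auto

lemma gdom_summable:
  assumes a: "0 < a" and C: "0 \<le> C"
  shows "gdom a C N m summable_on UNIV"
proof -
  have "(\<lambda>(z, j). gdom a C N m (z, j)) summable_on (Sigma UNIV (\<lambda>_. UNIV))"
    apply (rule summable_on_SigmaI[where g = "\<lambda>z. of_nat N * (C * ew a (m - z))"])
    subgoal for z
    proof -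
      have "(\<lambda>y. gdom a C N m (z, y)) = (\<lambda>j. if j < N then C * ew a (m - z) else 0)"
        by (auto simp: gdom_def fun_eq_iff)
      thus ?thesis using has_sum_below[of N "C * ew a (m - z)"] by simp
    qed
    subgoal using ew_shift_summable'[OF a, of m] by (intro summable_on_cmult_right)
    subgoal using C by (auto simp: gdom_def less_imp_le[OF ew_pos] intro!: mult_nonneg_nonneg)
    done
  thus ?thesis by (simp add: case_prod_unfold)
qed

lemma decfam_dom:
  fixes \<psi> :: "('d::finite \<Rightarrow> int) \<times> nat \<Rightarrow> ('d \<Rightarrow> int) \<Rightarrow> complex"
  assumes "decfam a C N \<psi>"
  shows "cmod (\<psi> l m) \<le> gdom a C N m l"
proof -
  obtain z j where l: "l = (z, j)" by (cases l)
  show ?thesis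
  proof (cases "j < N")
    case True thus ?thesis using assms unfolding l decfam_def gdom_def
      by simp
  next
    case False thus ?thesis using assms unfolding l decfam_def gdom_def by simp
  qed
qed

lemma decfam_C:
  fixes \<psi> :: "('d::finite \<Rightarrow> int) \<times> nat \<Rightarrow> ('d \<Rightarrow> int) \<Rightarrow> complex"
  assumes "decfam a C N \<psi>" "0 \<le> a"
  shows "cmod (\<psi> l n) \<le> C"
proof -
  obtain z j where l: "l = (z, j)" by (cases l)
  have "cmod (\<psi> l n) \<le> C * ew a (n - z)" using assms unfolding l decfam_def by simp
  moreover have "0 \<le> C" using assms(1) unfolding l decfam_def by (meson norm_ge_zero order_trans ew_pos less_imp_le zero_le_mult_iff not_le)
  ultimately show ?thesis using ew_le1[OF assms(2), of "n - z"] by (meson mult_left_le order_trans)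
qed

lemma decfam_goodfam:
  fixes \<psi> :: "('d::finite \<Rightarrow> int) \<times> nat \<Rightarrow> ('d \<Rightarrow> int) \<Rightarrow> complex"
  assumes d: "decfam a C N \<psi>" and a: "0 < a" and C: "0 \<le> C"
    and on: "\<forall>i j. l2_inner (\<psi> i) (\<psi> j) = (if i = j \<and> \<psi> i \<noteq> (\<lambda>_. 0) then 1 else 0)"
  shows "goodfam \<psi> (C * infsum (ew a) (UNIV::('d \<Rightarrow> int) set))"
  unfolding goodfam_def
proof (intro conjI allI)
  show "l2_inner (\<psi> i) (\<psi> j) = (if i = j \<and> \<psi> i \<noteq> (\<lambda>_. 0) then 1 else 0)" for i j using on by blast
next
  fix m show "(\<lambda>i. cmod (\<psi> i m)) summable_on UNIV"
    by (rule summable_on_comparison_test[OF gdom_summable[OF a C, of N m]])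
       (auto intro: decfam_dom[OF d])
next
  fix i :: "('d \<Rightarrow> int) \<times> nat"
  obtain z j where l: "i = (z, j)" by (cases i)
  have b: "cmod (\<psi> i n) \<le> C * ew a (n - z)" for n using d unfolding l decfam_def by simp
  have s: "(\<lambda>n. C * ew a (n - z)) summable_on UNIV"
    by (intro summable_on_cmult_right ew_shift_summable a)
  show s1: "(\<lambda>n. cmod (\<psi> i n)) summable_on UNIV"
    by (rule summable_on_comparison_test[OF s]) (use b in auto)
  have "infsum (\<lambda>n. cmod (\<psi> i n)) UNIV \<le> infsum (\<lambda>n. C * ew a (n - z)) UNIV"
    by (rule infsum_mono[OF s1 s b])
  also have "\<dots> = C * infsum (\<lambda>n. ew a (n - z)) UNIV"
    by (rule infsum_cmult_right') 
  also have "\<dots> = C * infsum (ew a) (UNIV::('d \<Rightarrow> int) set)" by (simp add: shift_infsum)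
  finally show "infsum (\<lambda>n. cmod (\<psi> i n)) UNIV \<le> C * infsum (ew a) (UNIV::('d \<Rightarrow> int) set)" .
  show "l2 (\<psi> i)" unfolding l2_def
  proof (rule summable_on_comparison_test)
    show "(\<lambda>n. C * (C * ew a (n - z))) summable_on UNIV" by (intro summable_on_cmult_right s)
    fix n
    have "(cmod (\<psi> i n))\<^sup>2 = cmod (\<psi> i n) * cmod (\<psi> i n)" by (simp add: power2_eq_square)
    also have "\<dots> \<le> C * (C * ew a (n - z))"
      by (intro mult_mono b decfam_C[OF d] ) (use a C in auto)
    finally show "(cmod (\<psi> i n))\<^sup>2 \<le> C * (C * ew a (n - z))" .
  qed auto
qed




lemma bessel_fin:
  fixes B :: "(('d::finite \<Rightarrow> int) \<Rightarrow> complex) set"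
  assumes l2B: "\<And>u. u \<in> B \<Longrightarrow> l2 u"
    and onB: "\<And>u v. u \<in> B \<Longrightarrow> v \<in> B \<Longrightarrow> l2_inner u v = (if u = v then 1 else 0)"
    and F: "finite F" "F \<subseteq> B"
  shows "(\<Sum>\<phi>\<in>F. (cmod (\<phi> m))\<^sup>2) \<le> 1"
proof -
  define S where "S = (\<Sum>\<phi>\<in>F. (cmod (\<phi> m))\<^sup>2)"
  define w where "w = (\<lambda>n. \<Sum>\<phi>\<in>F. cnj (\<phi> m) * \<phi> n)"
  have S0: "0 \<le> S" unfolding S_def by (intro sum_nonneg) auto
  have ww: "w n * cnj (w n) = (\<Sum>\<phi>\<in>F. \<Sum>\<psi>\<in>F. cnj (\<phi> m) * \<psi> m * (\<phi> n * cnj (\<psi> n)))" for n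
    unfolding w_def by (simp add: cnj_sum sum_product mult_ac) (subst sum.swap, simp add: mult_ac)
  have hs: "((\<lambda>n. w n * cnj (w n)) has_sum
      (\<Sum>\<phi>\<in>F. \<Sum>\<psi>\<in>F. cnj (\<phi> m) * \<psi> m * l2_inner \<phi> \<psi>)) UNIV"
    unfolding ww l2_inner_def
    by (intro has_sum_sum_fin F has_sum_cmult_right has_sum_infsum l2_prod_summable l2B)
       (use F in auto)
  have "(\<Sum>\<phi>\<in>F. \<Sum>\<psi>\<in>F. cnj (\<phi> m) * \<psi> m * l2_inner \<phi> \<psi>) = (\<Sum>\<phi>\<in>F. cnj (\<phi> m) * \<phi> m)"
  proof (rule sum.cong[OF refl])
    fix \<phi> assume "\<phi> \<in> F"
    hence "(\<Sum>\<psi>\<in>F. cnj (\<phi> m) * \<psi> m * l2_inner \<phi> \<psi>) = (\<Sum>\<psi>\<in>F. if \<psi> = \<phi> then cnj (\<phi> m) * \<phi> m else 0)"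
      using F by (intro sum.cong refl) (auto simp: onB[OF subsetD[OF F(2)] subsetD[OF F(2)]])
    also have "\<dots> = cnj (\<phi> m) * \<phi> m" using F \<open>\<phi> \<in> F\<close> by (simp add: sum.delta)
    finally show "(\<Sum>\<psi>\<in>F. cnj (\<phi> m) * \<psi> m * l2_inner \<phi> \<psi>) = cnj (\<phi> m) * \<phi> m" .
  qed
  also have "\<dots> = of_real S" unfolding S_def by (simp add: mult.commute mult_cnj_cmod)
  finally have hs2: "((\<lambda>n. of_real ((cmod (w n))\<^sup>2) :: complex) has_sum of_real S) UNIV"
    using hs by (simp add: mult_cnj_cmod)
  hence hs3: "((\<lambda>n. (cmod (w n))\<^sup>2) has_sum S) UNIV"
    using has_sum_of_real_iff[where 'a=complex and f="\<lambda>n. (cmod (w n))\<^sup>2" and c=S and A=UNIV] by blast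
  have "(cmod (w m))\<^sup>2 \<le> S"
  proof -
    have "infsum (\<lambda>n. (cmod (w n))\<^sup>2) {m} \<le> infsum (\<lambda>n. (cmod (w n))\<^sup>2) UNIV"
      using hs3 by (intro infsum_mono_neutral) (auto dest: has_sum_imp_summable)
    thus ?thesis using hs3 by (simp add: infsumI)
  qed
  moreover have "w m = of_real S" unfolding w_def S_def by (simp add: mult.commute mult_cnj_cmod)
  ultimately have "S\<^sup>2 \<le> S" using S0 by simp
  hence SS: "S * S \<le> S * 1" by (simp add: power2_eq_square)
  have "S \<le> 1"
  proof (cases "S = 0")
    case False hence "0 < S" using S0 by simp
    thus ?thesis using SS mult_le_cancel_left_pos by blast
  qed simp
  thus ?thesis unfolding S_def .
qed


lemma ew_sq: "(C * ew a n)\<^sup>2 = C\<^sup>2 * ew (2 * a) n"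
  unfolding ew_def by (simp add: power2_eq_square exp_add[symmetric] algebra_simps)

lemma fiber_bound:
  fixes B :: "(('d::finite \<Rightarrow> int) \<Rightarrow> complex) set" and c :: "(('d \<Rightarrow> int) \<Rightarrow> complex) \<Rightarrow> ('d \<Rightarrow> int)"
  assumes l2B: "\<And>u. u \<in> B \<Longrightarrow> l2 u"
    and onB: "\<And>u v. u \<in> B \<Longrightarrow> v \<in> B \<Longrightarrow> l2_inner u v = (if u = v then 1 else 0)"
    and a: "0 < a"
    and dec: "\<And>\<phi> m. \<phi> \<in> B \<Longrightarrow> cmod (\<phi> m) \<le> C * ew a (m - c \<phi>)"
  shows "\<exists>N. \<forall>z. finite {\<phi>\<in>B. c \<phi> = z} \<and> card {\<phi>\<in>B. c \<phi> = z} \<le> N"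
proof -
  define G where "G = (\<lambda>n::'d \<Rightarrow> int. C\<^sup>2 * ew (2 * a) n)"
  have Gs: "G summable_on UNIV" unfolding G_def using a by (intro summable_on_cmult_right ew_summable) auto
  obtain F0 where F0: "finite F0" "infsum G (UNIV - F0) < 1/2"
    using tail_small[OF Gs, of "1/2"] by auto
  have mass: "1/2 \<le> (\<Sum>n\<in>(\<lambda>n. n + c \<phi>) ` F0. (cmod (\<phi> n))\<^sup>2)" if \<phi>: "\<phi> \<in> B" for \<phi>
  proof -
    define D where "D = (\<lambda>n. n + c \<phi>) ` F0"
    have Dfin: "finite D" unfolding D_def using F0 by simp
    have s: "(\<lambda>n. (cmod (\<phi> n))\<^sup>2) summable_on UNIV" using l2B[OF \<phi>] by (simp add: l2_def)
    have "of_real (infsum (\<lambda>n. (cmod (\<phi> n))\<^sup>2) UNIV) = l2_inner \<phi> \<phi>"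
      by (rule l2_inner_self[OF l2B[OF \<phi>], symmetric])
    also have "\<dots> = 1" using onB[OF \<phi> \<phi>] by simp
    finally have tot: "infsum (\<lambda>n. (cmod (\<phi> n))\<^sup>2) UNIV = 1"
      by (metis of_real_eq_1_iff)
    have "infsum (\<lambda>n. (cmod (\<phi> n))\<^sup>2) (UNIV - D) = 1 - (\<Sum>n\<in>D. (cmod (\<phi> n))\<^sup>2)"
      using infsum_Diff[OF s, of D] Dfin tot by (simp add: summable_on_subset_banach[OF s])
    moreover have "infsum (\<lambda>n. (cmod (\<phi> n))\<^sup>2) (UNIV - D) \<le> infsum (\<lambda>n. G (n - c \<phi>)) (UNIV - D)"
    proof (rule infsum_mono)
      show "(\<lambda>n. (cmod (\<phi> n))\<^sup>2) summable_on UNIV - D" by (rule summable_on_subset_banach[OF s]) auto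
      have "(\<lambda>n. G (n - c \<phi>)) summable_on UNIV" using Gs by (simp add: shift_summable_iff)
      thus "(\<lambda>n. G (n - c \<phi>)) summable_on UNIV - D" by (rule summable_on_subset_banach) auto
      fix n
      have "(cmod (\<phi> n))\<^sup>2 \<le> (C * ew a (n - c \<phi>))\<^sup>2" using dec[OF \<phi>, of n] by (intro power_mono) auto
      thus "(cmod (\<phi> n))\<^sup>2 \<le> G (n - c \<phi>)" unfolding G_def ew_sq .
    qed
    moreover have "infsum (\<lambda>n. G (n - c \<phi>)) (UNIV - D) = infsum G (UNIV - F0)"
    proof (rule infsum_reindex_bij_betw)
      show "bij_betw (\<lambda>n. n - c \<phi>) (UNIV - D) (UNIV - F0)"
        unfolding D_def by (rule bij_betwI[of _ _ _ "\<lambda>n. n + c \<phi>"]) (auto simp: image_iff, metis diff_add_cancel)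
    qed
    ultimately show ?thesis using F0(2) unfolding D_def by linarith
  qed
  define N where "N = 2 * card F0"
  have cardF: "card F \<le> N" if F: "finite F" "F \<subseteq> {\<phi>\<in>B. c \<phi> = z}" for F z
  proof -
    define D where "D = (\<lambda>n. n + z) ` F0"
    have Dfin: "finite D" unfolding D_def using F0 by simp
    have "real (card F) * (1/2) = (\<Sum>\<phi>\<in>F. 1/2)" by simp
    also have "\<dots> \<le> (\<Sum>\<phi>\<in>F. \<Sum>n\<in>D. (cmod (\<phi> n))\<^sup>2)"
    proof (rule sum_mono)
      fix \<phi> assume "\<phi> \<in> F"
      hence "\<phi> \<in> B" "c \<phi> = z" using F by auto
      thus "1/2 \<le> (\<Sum>n\<in>D. (cmod (\<phi> n))\<^sup>2)" using mass[of \<phi>] unfolding D_def by simp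
    qed
    also have "\<dots> = (\<Sum>n\<in>D. \<Sum>\<phi>\<in>F. (cmod (\<phi> n))\<^sup>2)" by (rule sum.swap)
    also have "\<dots> \<le> (\<Sum>n\<in>D. 1)"
      by (intro sum_mono bessel_fin[OF l2B onB F(1)]) (use F in auto)
    also have "\<dots> = real (card D)" by simp
    also have "\<dots> \<le> real (card F0)" unfolding D_def by (simp add: card_image_le F0(1))
    finally show ?thesis unfolding N_def by simp
  qed
  have "finite {\<phi>\<in>B. c \<phi> = z} \<and> card {\<phi>\<in>B. c \<phi> = z} \<le> N" for z
  proof -
    have fin: "finite {\<phi>\<in>B. c \<phi> = z}"
    proof (rule ccontr)
      assume "infinite {\<phi>\<in>B. c \<phi> = z}"
      then obtain F where "F \<subseteq> {\<phi>\<in>B. c \<phi> = z}" "finite F" "card F = Suc N"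
        using infinite_arbitrarily_large by blast
      thus False using cardF by fastforce
    qed
    thus ?thesis using cardF[OF fin, of z] by simp
  qed
  thus ?thesis by blast
qed




lemma pointwise_subseq:
  fixes x :: "nat \<Rightarrow> 'i::countable \<Rightarrow> complex"
  assumes b: "\<And>k i. cmod (x k i) \<le> C"
  obtains r y where "strict_mono r" "\<And>i. (\<lambda>k. x (r k) i) \<longlonglongrightarrow> y i"
proof -
  define K where "K = PiE (UNIV::'i set) (\<lambda>_. cball (0::complex) C)"
  have "compactin (product_topology (\<lambda>_. euclidean) UNIV) K"
    unfolding K_def by (subst compactin_PiE) auto
  hence "compactin euclidean K" by (simp add: euclidean_product_topology)
  hence "compact K" by simp
  hence sc: "seq_compact K" by (rule compact_imp_seq_compact)
  have "\<forall>k. x k \<in> K" unfolding K_def using b by (auto simp: PiE_def)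
  then obtain l r where lr: "l \<in> K" "strict_mono r" "(x \<circ> r) \<longlonglongrightarrow> l"
    using seq_compactE[OF sc] by blast
  have "(\<lambda>k. x (r k) i) \<longlonglongrightarrow> l i" for i
    using continuous_on_tendsto_compose[OF continuous_on_product_coordinates[of i] lr(3)]
    by (simp add: o_def)
  thus ?thesis using that lr(2) by blast
qed

lemma labeling:
  fixes B :: "(('d::finite \<Rightarrow> int) \<Rightarrow> complex) set" and c :: "(('d \<Rightarrow> int) \<Rightarrow> complex) \<Rightarrow> ('d \<Rightarrow> int)"
  assumes fin: "\<And>z. finite {\<phi>\<in>B. c \<phi> = z} \<and> card {\<phi>\<in>B. c \<phi> = z} \<le> N"
    and nz: "(\<lambda>_. 0) \<notin> B"
  obtains \<Phi> :: "('d \<Rightarrow> int) \<times> nat \<Rightarrow> ('d \<Rightarrow> int) \<Rightarrow> complex" where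
    "\<And>z j. N \<le> j \<Longrightarrow> \<Phi> (z, j) = (\<lambda>_. 0)"
    "\<And>z j. \<Phi> (z, j) \<noteq> (\<lambda>_. 0) \<Longrightarrow> \<Phi> (z, j) \<in> B \<and> c (\<Phi> (z, j)) = z"
    "B = {\<Phi> l | l. \<Phi> l \<noteq> (\<lambda>_. 0)}"
    "\<And>l l'. \<Phi> l = \<Phi> l' \<Longrightarrow> \<Phi> l \<noteq> (\<lambda>_. 0) \<Longrightarrow> l = l'"
proof -
  define L where "L z = (SOME xs. set xs = {\<phi>\<in>B. c \<phi> = z} \<and> distinct xs)" for z
  have L: "set (L z) = {\<phi>\<in>B. c \<phi> = z} \<and> distinct (L z)" for z
    unfolding L_def by (rule someI_ex) (use fin finite_distinct_list in blast)
  have len: "length (L z) \<le> N" for z using L[of z] fin[of z] distinct_card by metis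
  define \<Phi> where "\<Phi> = (\<lambda>(z, j). if j < length (L z) then L z ! j else (\<lambda>_. 0))"
  have 1: "\<Phi> (z, j) = (\<lambda>_. 0)" if "N \<le> j" for z j
    using len[of z] that unfolding \<Phi>_def by auto
  have 2: "\<Phi> (z, j) \<in> B \<and> c (\<Phi> (z, j)) = z" if "\<Phi> (z, j) \<noteq> (\<lambda>_. 0)" for z j
  proof -
    have j: "j < length (L z)" using that unfolding \<Phi>_def by (auto split: if_splits)
    hence "L z ! j \<in> set (L z)" by simp
    thus ?thesis using L[of z] j unfolding \<Phi>_def by auto
  qed
  have 3: "B = {\<Phi> l | l. \<Phi> l \<noteq> (\<lambda>_. 0)}"
  proof
    show "B \<subseteq> {\<Phi> l | l. \<Phi> l \<noteq> (\<lambda>_. 0)}"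
    proof
      fix \<phi> assume \<phi>: "\<phi> \<in> B"
      hence "\<phi> \<in> set (L (c \<phi>))" using L by auto
      then obtain j where j: "j < length (L (c \<phi>))" "L (c \<phi>) ! j = \<phi>" by (auto simp: in_set_conv_nth)
      hence "\<Phi> (c \<phi>, j) = \<phi>" unfolding \<Phi>_def by simp
      moreover have "\<phi> \<noteq> (\<lambda>_. 0)" using \<phi> nz by auto
      ultimately have "\<phi> = \<Phi> (c \<phi>, j) \<and> \<Phi> (c \<phi>, j) \<noteq> (\<lambda>_. 0)" by simp
      thus "\<phi> \<in> {\<Phi> l | l. \<Phi> l \<noteq> (\<lambda>_. 0)}" by blast
    qed
  next
    show "{\<Phi> l | l. \<Phi> l \<noteq> (\<lambda>_. 0)} \<subseteq> B"
    proof
      fix \<phi> assume "\<phi> \<in> {\<Phi> l | l. \<Phi> l \<noteq> (\<lambda>_. 0)}"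
      then obtain z j where "\<phi> = \<Phi> (z, j)" "\<Phi> (z, j) \<noteq> (\<lambda>_. 0)" by auto
      thus "\<phi> \<in> B" using 2 by auto
    qed
  qed
  have 4: "l = l'" if "\<Phi> l = \<Phi> l'" "\<Phi> l \<noteq> (\<lambda>_. 0)" for l l'
  proof -
    obtain z j z' j' where l: "l = (z, j)" "l' = (z', j')" by (cases l, cases l')
    have "z = z'" using 2[of z j] 2[of z' j'] that unfolding l by auto
    have jl: "j < length (L z)" "j' < length (L z')" using that unfolding l \<Phi>_def by (auto split: if_splits)
    have "L z ! j = L z ! j'" using that jl unfolding l \<Phi>_def \<open>z = z'\<close> by simp
    hence "j = j'" using L[of z] jl \<open>z = z'\<close> by (simp add: nth_eq_iff_index_eq)
    thus ?thesis using l \<open>z = z'\<close> by simp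
  qed
  show ?thesis by (rule that[OF 1 2 3 4]) auto
qed

definition hop :: "(('d::finite \<Rightarrow> int) \<Rightarrow> real) \<Rightarrow> (('d \<Rightarrow> int) \<Rightarrow> complex) \<Rightarrow> ('d \<Rightarrow> int) \<Rightarrow> complex" where
  "hop V u n = (\<Sum>m\<in>{m. znorm (m - n) = 1}. u m) + complex_of_real (V n) * u n"

lemma schr_op_hop: "schr_op f T \<omega> = hop (\<lambda>n. f (Tpow T n \<omega>))"
  by (intro ext) (simp add: schr_op_def hop_def)

lemma hop_shift: "hop (\<lambda>n. V (n + s)) (\<lambda>n. u (n + s)) n = hop V u (n + s)"
proof -
  have "(\<Sum>m\<in>{m. znorm (m - n) = 1}. u (m + s)) = (\<Sum>m\<in>{m. znorm (m - (n + s)) = 1}. u m)"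
  proof (rule sum.reindex_bij_betw)
    show "bij_betw (\<lambda>m. m + s) {m. znorm (m - n) = 1} {m. znorm (m - (n + s)) = 1}"
      by (rule bij_betwI[of _ _ _ "\<lambda>m. m - s"]) (auto simp: algebra_simps)
  qed
  thus ?thesis unfolding hop_def by simp
qed

lemma tendsto_hop:
  fixes Vk :: "nat \<Rightarrow> ('d::finite \<Rightarrow> int) \<Rightarrow> real"
  assumes "\<And>n. (\<lambda>k. Vk k n) \<longlonglongrightarrow> V n" "\<And>n. (\<lambda>k. u k n) \<longlonglongrightarrow> w n"
  shows "(\<lambda>k. hop (Vk k) (u k) n) \<longlonglongrightarrow> hop V w n"
  unfolding hop_def using assms by (intro tendsto_intros) auto




lemma iter_int_0: "iter_int g 0 = id"
  by (simp add: iter_int_def)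

lemma iter_int_suc:
  assumes gh: "g \<circ> inv g = id"
  shows "iter_int g (k + 1) = g \<circ> iter_int g k"
proof (cases "0 \<le> k")
  case True
  hence "nat (k + 1) = Suc (nat k)" by simp
  thus ?thesis using True by (simp add: iter_int_def)
next
  case False
  show ?thesis
  proof (cases "k = -1")
    case True thus ?thesis using gh by (simp add: iter_int_def)
  next
    case False2: False
    hence "nat (- k) = Suc (nat (- (k + 1)))" using False by simp
    hence "iter_int g k = inv g \<circ> iter_int g (k + 1)"
      using False False2 by (simp add: iter_int_def)
    hence "g \<circ> iter_int g k = (g \<circ> inv g) \<circ> iter_int g (k + 1)" by (simp add: o_assoc)
    thus ?thesis using gh by simp
  qed
qed

lemma iter_int_pred:
  assumes gh: "g \<circ> inv g = id" and hg: "inv g \<circ> g = id"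
  shows "iter_int g (k - 1) = inv g \<circ> iter_int g k"
proof -
  have "iter_int g k = g \<circ> iter_int g (k - 1)" using iter_int_suc[OF gh, of "k - 1"] by simp
  hence "inv g \<circ> iter_int g k = (inv g \<circ> g) \<circ> iter_int g (k - 1)" by (simp add: o_assoc)
  thus ?thesis using hg by simp
qed

lemma iter_int_add:
  assumes gh: "g \<circ> inv g = id" and hg: "inv g \<circ> g = id"
  shows "iter_int g (a + b) = iter_int g a \<circ> iter_int g b"
proof (induction a rule: int_induct[where k = 0])
  case base thus ?case by (simp add: iter_int_0)
next
  case (step1 i)
  have "iter_int g (i + 1 + b) = iter_int g ((i + b) + 1)" by (simp add: algebra_simps)
  also have "\<dots> = g \<circ> iter_int g (i + b)" by (rule iter_int_suc[OF gh])
  also have "\<dots> = (g \<circ> iter_int g i) \<circ> iter_int g b" using step1 by (metis comp_assoc)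
  also have "g \<circ> iter_int g i = iter_int g (i + 1)" by (rule iter_int_suc[OF gh, symmetric])
  finally show ?case .
next
  case (step2 i)
  have "iter_int g (i - 1 + b) = iter_int g ((i + b) - 1)" by (simp add: algebra_simps)
  also have "\<dots> = inv g \<circ> iter_int g (i + b)" by (rule iter_int_pred[OF gh hg])
  also have "\<dots> = (inv g \<circ> iter_int g i) \<circ> iter_int g b" using step2 by (metis comp_assoc)
  also have "inv g \<circ> iter_int g i = iter_int g (i - 1)" by (rule iter_int_pred[OF gh hg, symmetric])
  finally show ?case .
qed

lemma funpow_comm_comp:
  assumes xg: "x \<circ> g = g \<circ> x"
  shows "x \<circ> (g ^^ n) = (g ^^ n) \<circ> x"
proof (induction n)
  case 0 thus ?case by simp
next
  case (Suc n)
  have "x \<circ> (g ^^ Suc n) = (x \<circ> g) \<circ> (g ^^ n)" by (simp add: comp_assoc)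
  also have "\<dots> = g \<circ> (x \<circ> (g ^^ n))" unfolding xg by (simp add: comp_assoc)
  also have "\<dots> = g \<circ> ((g ^^ n) \<circ> x)" unfolding Suc ..
  also have "\<dots> = (g ^^ Suc n) \<circ> x" by (simp add: comp_assoc)
  finally show ?case .
qed

lemma iter_int_comm:
  assumes "x \<circ> g = g \<circ> x" "x \<circ> inv g = inv g \<circ> x"
  shows "x \<circ> iter_int g k = iter_int g k \<circ> x"
proof (cases "0 \<le> k")
  case True thus ?thesis unfolding iter_int_def using funpow_comm_comp[OF assms(1)] by simp
next
  case False thus ?thesis unfolding iter_int_def using funpow_comm_comp[OF assms(2)] by simp
qed

lemma funpow_cont:
  fixes g :: "'a::topological_space \<Rightarrow> 'a"
  assumes "continuous_on UNIV g"
  shows "continuous_on UNIV (g ^^ n)"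
proof (induction n)
  case 0 show ?case by (simp add: id_def)
next
  case (Suc n)
  have "continuous_on UNIV (g \<circ> (g ^^ n))"
    by (rule continuous_on_compose[OF Suc continuous_on_subset[OF assms]]) auto
  thus ?case by simp
qed

lemma iter_int_cont:
  fixes g :: "'a::topological_space \<Rightarrow> 'a"
  assumes "continuous_on UNIV g" "continuous_on UNIV (inv g)"
  shows "continuous_on UNIV (iter_int g k)"
  unfolding iter_int_def using funpow_cont[OF assms(1)] funpow_cont[OF assms(2)] by auto


lemma inv_comm:
  assumes "x \<circ> g = g \<circ> x" "g \<circ> h = id" "h \<circ> g = id"
  shows "x \<circ> h = h \<circ> x"
proof -
  have "x \<circ> h = (h \<circ> g) \<circ> x \<circ> h" using assms(3) by simp
  also have "\<dots> = h \<circ> (x \<circ> g) \<circ> h" using assms(1) by (simp add: comp_assoc)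
  also have "\<dots> = h \<circ> x \<circ> (g \<circ> h)" by (simp add: comp_assoc)
  also have "\<dots> = h \<circ> x" using assms(2) by simp
  finally show ?thesis .
qed

locale tsys =
  fixes T :: "'d::finite \<Rightarrow> 'a::topological_space \<Rightarrow> 'a"
  assumes gh: "\<And>i. T i \<circ> inv (T i) = id" and hg: "\<And>i. inv (T i) \<circ> T i = id"
    and cT: "\<And>i. continuous_on UNIV (T i)" and cTi: "\<And>i. continuous_on UNIV (inv (T i))"
    and comm: "\<And>i j. T i \<circ> T j = T j \<circ> T i"
begin

definition A where "A i k = iter_int (T i) k"

lemma A_cont: "continuous_on UNIV (A i k)"
  unfolding A_def by (rule iter_int_cont[OF cT cTi])

lemma A_comm: "A i a \<circ> A j b = A j b \<circ> A i a"
proof -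
  have 1: "T j \<circ> inv (T i) = inv (T i) \<circ> T j" by (rule inv_comm[OF comm gh hg])
  have 2: "T j \<circ> A i a = A i a \<circ> T j" unfolding A_def by (rule iter_int_comm[OF comm 1])
  have 3: "A i a \<circ> inv (T j) = inv (T j) \<circ> A i a" by (rule inv_comm[OF 2[symmetric] gh hg])
  show ?thesis unfolding A_def by (rule iter_int_comm[OF 2[symmetric, unfolded A_def] 3[unfolded A_def]])
qed

lemma A_add: "A i (a + b) = A i a \<circ> A i b"
  unfolding A_def by (rule iter_int_add[OF gh hg])

definition Fo where "Fo S n = Finite_Set.fold (\<lambda>i h. A i (n i) \<circ> h) id S"

lemma cfc: "comp_fun_commute_on UNIV (\<lambda>i h. A i (n i) \<circ> h)"
  by unfold_locales (auto simp: fun_eq_iff, metis A_comm comp_apply)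

lemma Fo_insert: "finite S \<Longrightarrow> x \<notin> S \<Longrightarrow> Fo (insert x S) n = A x (n x) \<circ> Fo S n"
  unfolding Fo_def by (rule comp_fun_commute_on.fold_insert[OF cfc]) auto

lemma Fo_empty: "Fo {} n = id"
  unfolding Fo_def by simp

lemma Fo_cont: "finite S \<Longrightarrow> continuous_on UNIV (Fo S n)"
proof (induction S rule: finite_induct)
  case empty thus ?case by (simp add: Fo_empty id_def)
next
  case (insert x S)
  have "continuous_on UNIV (A x (n x) \<circ> Fo S n)"
    by (rule continuous_on_compose[OF insert.IH continuous_on_subset[OF A_cont]]) auto
  thus ?case by (simp add: Fo_insert insert.hyps)
qed

lemma Fo_comm: "finite S \<Longrightarrow> Fo S n \<circ> A j b = A j b \<circ> Fo S n"
proof (induction S rule: finite_induct)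
  case empty thus ?case by (simp add: Fo_empty)
next
  case (insert x S)
  have "(A x (n x) \<circ> Fo S n) \<circ> A j b = A x (n x) \<circ> (Fo S n \<circ> A j b)" by (simp add: comp_assoc)
  also have "\<dots> = (A x (n x) \<circ> A j b) \<circ> Fo S n" unfolding insert.IH by (simp add: comp_assoc)
  also have "\<dots> = A j b \<circ> (A x (n x) \<circ> Fo S n)" unfolding A_comm[of x _ j] by (simp add: comp_assoc)
  finally show ?case by (simp only: Fo_insert[OF insert.hyps])
qed

lemma Fo_add: "finite S \<Longrightarrow> Fo S (m + s) = Fo S m \<circ> Fo S s"
proof (induction S rule: finite_induct)
  case empty thus ?case by (simp add: Fo_empty)
next
  case (insert x S)
  have "A x ((m + s) x) \<circ> Fo S (m + s) = A x (m x) \<circ> A x (s x) \<circ> (Fo S m \<circ> Fo S s)"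
    unfolding insert.IH by (simp add: A_add)
  also have "\<dots> = A x (m x) \<circ> (A x (s x) \<circ> Fo S m) \<circ> Fo S s" by (simp add: comp_assoc)
  also have "A x (s x) \<circ> Fo S m = Fo S m \<circ> A x (s x)" by (rule Fo_comm[OF insert.hyps(1), symmetric])
  finally have "A x ((m + s) x) \<circ> Fo S (m + s) = (A x (m x) \<circ> Fo S m) \<circ> (A x (s x) \<circ> Fo S s)"
    by (simp only: comp_assoc)
  thus ?case by (simp only: Fo_insert[OF insert.hyps])
qed

lemma Tpow_Fo: "Tpow T n = Fo UNIV n"
  unfolding Tpow_def Fo_def A_def ..

lemma Tpow_cont: "continuous_on UNIV (Tpow T n)"
  unfolding Tpow_Fo by (rule Fo_cont) simp

lemma Tpow_add: "Tpow T (m + s) x = Tpow T m (Tpow T s x)"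
  unfolding Tpow_Fo using Fo_add[of UNIV m s] by simp

end


lemma tsys_from_homeo:
  fixes T :: "'d::finite \<Rightarrow> 'a::topological_space \<Rightarrow> 'a"
  assumes homeo: "\<And>i. \<exists>g. homeomorphism UNIV UNIV (T i) g"
    and comm: "\<And>i j. T i \<circ> T j = T j \<circ> T i"
  shows "tsys T"
proof -
  have h: "T i \<circ> inv (T i) = id \<and> inv (T i) \<circ> T i = id \<and> continuous_on UNIV (T i) \<and> continuous_on UNIV (inv (T i))" for i
  proof -
    obtain g where g: "homeomorphism UNIV UNIV (T i) g" using homeo by blast
    hence g1: "\<And>x. g (T i x) = x" and g2: "\<And>y. T i (g y) = y" and c1: "continuous_on UNIV (T i)"
      and c2: "continuous_on UNIV g" by (auto simp: homeomorphism_def)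
    have "inv (T i) = g" by (rule inv_equality) (use g1 g2 in auto)
    thus ?thesis using g1 g2 c1 c2 by (auto simp: fun_eq_iff)
  qed
  show ?thesis by unfold_locales (use h comm in auto)
qed

lemma approx:
  fixes T :: "'d::finite \<Rightarrow> 'a::topological_space \<Rightarrow> 'a" and f :: "'a \<Rightarrow> real"
  assumes ts: "tsys T" and minimal: "minimal_action T" and cont: "continuous_on UNIV f"
  shows "\<exists>s. \<forall>n. (\<lambda>k. f (Tpow T (n + s k) \<omega>0)) \<longlonglongrightarrow> f (Tpow T n \<omega>)"
proof -
  interpret tsys T by (rule ts)
  define U where "U k = (\<Inter>n\<in>from_nat ` {..k}. (\<lambda>x. f (Tpow T n x)) -` ball (f (Tpow T n \<omega>)) (inverse (real (Suc k))))" for k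
  have cfT: "continuous_on UNIV (\<lambda>x. f (Tpow T n x))" for n
    using continuous_on_compose[OF Tpow_cont continuous_on_subset[OF cont]] by (auto simp: o_def)
  have openU: "open (U k)" for k
    unfolding U_def
  proof (intro open_INT ballI)
    fix n
    have "open ((\<lambda>x. f (Tpow T n x)) -` ball (f (Tpow T n \<omega>)) (inverse (real (Suc k))) \<inter> UNIV)"
      using cfT[of n] by (subst (asm) continuous_on_open_vimage) auto
    thus "open ((\<lambda>x. f (Tpow T n x)) -` ball (f (Tpow T n \<omega>)) (inverse (real (Suc k))))" by simp
  qed auto
  have inU: "\<omega> \<in> U k" for k unfolding U_def by auto
  have "\<exists>s. Tpow T s \<omega>0 \<in> U k" for k
  proof -
    have cl: "closure {Tpow T n \<omega>0 | n. True} = UNIV" using minimal by (simp add: minimal_action_def)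
    have "U k \<inter> closure {Tpow T n \<omega>0 | n. True} \<noteq> {}" using inU[of k] cl by auto
    hence "U k \<inter> {Tpow T n \<omega>0 | n. True} \<noteq> {}" using open_Int_closure_eq_empty[OF openU] by blast
    thus ?thesis by blast
  qed
  then obtain s where s: "\<And>k. Tpow T (s k) \<omega>0 \<in> U k" by metis
  have close: "dist (f (Tpow T (n + s k) \<omega>0)) (f (Tpow T n \<omega>)) < inverse (real (Suc k))"
    if "to_nat n \<le> k" for n k
  proof -
    have "n \<in> from_nat ` {..k}" using that by (metis atMost_iff from_nat_to_nat image_eqI)
    hence "f (Tpow T n (Tpow T (s k) \<omega>0)) \<in> ball (f (Tpow T n \<omega>)) (inverse (real (Suc k)))"
      using s[of k] unfolding U_def by blast
    thus ?thesis by (simp add: Tpow_add dist_commute)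
  qed
  have "(\<lambda>k. f (Tpow T (n + s k) \<omega>0)) \<longlonglongrightarrow> f (Tpow T n \<omega>)" for n
  proof (rule metric_LIMSEQ_I)
    fix r :: real assume r: "0 < r"
    obtain k0 where k0: "inverse (real (Suc k0)) < r" using reals_Archimedean[OF r] by blast
    show "\<exists>no. \<forall>k\<ge>no. dist (f (Tpow T (n + s k) \<omega>0)) (f (Tpow T n \<omega>)) < r"
    proof (intro exI allI impI)
      fix k assume k: "k \<ge> max k0 (to_nat n)"
      have "dist (f (Tpow T (n + s k) \<omega>0)) (f (Tpow T n \<omega>)) < inverse (real (Suc k))"
        using close k by simp
      also have "\<dots> \<le> inverse (real (Suc k0))" using k by (simp add: le_imp_inverse_le)
      finally show "dist (f (Tpow T (n + s k) \<omega>0)) (f (Tpow T n \<omega>)) < r" using k0 by simp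
    qed
  qed
  thus ?thesis by blast
qed




definition lfam :: "real \<Rightarrow> real \<Rightarrow> nat \<Rightarrow> (('d::finite \<Rightarrow> int) \<Rightarrow> real) \<Rightarrow>
    (('d \<Rightarrow> int) \<times> nat \<Rightarrow> ('d \<Rightarrow> int) \<Rightarrow> complex) \<Rightarrow> bool" where
  "lfam a C N W \<psi> \<longleftrightarrow> decfam a C N \<psi> \<and>
     (\<forall>l l'. l2_inner (\<psi> l) (\<psi> l') = (if l = l' \<and> \<psi> l \<noteq> (\<lambda>_. 0) then 1 else 0)) \<and>
     (\<forall>m. Pf \<psi> m = delta m) \<and>
     (\<forall>l. \<psi> l \<noteq> (\<lambda>_. 0) \<longrightarrow> (\<exists>E. \<forall>n. hop W (\<psi> l) n = E * \<psi> l n))"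

lemma l2_inner_zero_left: "l2_inner (\<lambda>_. 0) u = 0"
  by (simp add: l2_inner_def)

lemma I1:
  fixes V0 :: "('d::finite \<Rightarrow> int) \<Rightarrow> real"
  assumes a: "0 < a" and C: "0 < C" and ule: "ULE_with a C (hop V0)"
  shows "\<exists>N \<Phi>. lfam a C N V0 \<Phi>"
proof -
  obtain B0 c0 where co: "complete_orthonormal B0" and eig: "\<forall>\<phi>\<in>B0. is_eigenfunction (hop V0) \<phi>"
    and dec: "\<forall>\<phi>\<in>B0. \<forall>m. cmod (\<phi> m) \<le> C * exp (- a * znorm (m - c0 \<phi>))"
    using ule unfolding ULE_with_def by blast
  have dec': "cmod (\<phi> m) \<le> C * ew a (m - c0 \<phi>)" if "\<phi> \<in> B0" for \<phi> m
    using dec that by (simp add: ew_def)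
  have l2B: "\<And>u. u \<in> B0 \<Longrightarrow> l2 u" and onB: "\<And>u v. u \<in> B0 \<Longrightarrow> v \<in> B0 \<Longrightarrow> l2_inner u v = (if u = v then 1 else 0)"
    using co unfolding complete_orthonormal_def by auto
  obtain N where fin: "\<And>z. finite {\<phi>\<in>B0. c0 \<phi> = z} \<and> card {\<phi>\<in>B0. c0 \<phi> = z} \<le> N"
    using fiber_bound[OF l2B onB a dec'] by blast
  have nz: "(\<lambda>_. 0) \<notin> B0" using eig by (auto simp: is_eigenfunction_def)
  obtain \<Phi> where P1: "\<And>z j. N \<le> j \<Longrightarrow> \<Phi> (z, j) = (\<lambda>_. 0)"
    and P2: "\<And>z j. \<Phi> (z, j) \<noteq> (\<lambda>_. 0) \<Longrightarrow> \<Phi> (z, j) \<in> B0 \<and> c0 (\<Phi> (z, j)) = z"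
    and P3: "B0 = {\<Phi> l | l. \<Phi> l \<noteq> (\<lambda>_. 0)}"
    and P4: "\<And>l l'. \<Phi> l = \<Phi> l' \<Longrightarrow> \<Phi> l \<noteq> (\<lambda>_. 0) \<Longrightarrow> l = l'"
    using labeling[OF fin nz] by blast
  have P2': "\<Phi> l \<in> B0" if "\<Phi> l \<noteq> (\<lambda>_. 0)" for l
    using P2[of "fst l" "snd l"] that by simp
  have d: "decfam a C N \<Phi>"
    unfolding decfam_def
  proof (intro conjI allI impI)
    fix z j n
    show "cmod (\<Phi> (z, j) n) \<le> C * ew a (n - z)"
    proof (cases "\<Phi> (z, j) = (\<lambda>_. 0)")
      case True thus ?thesis using C ew_pos[of a "n - z"] by simp
    next
      case False thus ?thesis using P2[OF False] dec'[of "\<Phi> (z, j)" n] by simp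
    qed
  next
    fix z j assume "N \<le> j" thus "\<Phi> (z, j) = (\<lambda>_. 0)" by (rule P1)
  qed
  have on: "l2_inner (\<Phi> l) (\<Phi> l') = (if l = l' \<and> \<Phi> l \<noteq> (\<lambda>_. 0) then 1 else 0)" for l l'
  proof (cases "\<Phi> l = (\<lambda>_. 0)")
    case True thus ?thesis by (simp add: l2_inner_zero_left)
  next
    case False
    show ?thesis
    proof (cases "\<Phi> l' = (\<lambda>_. 0)")
      case True thus ?thesis using False by (auto simp: l2_inner_zero_right)
    next
      case False2: False
      have "l2_inner (\<Phi> l) (\<Phi> l') = (if \<Phi> l = \<Phi> l' then 1 else 0)"
        by (rule onB[OF P2'[OF False] P2'[OF False2]])
      thus ?thesis using P4[of l l'] False by auto
    qed
  qed
  have gf: "goodfam \<Phi> (C * infsum (ew a) (UNIV::('d \<Rightarrow> int) set))"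
    by (rule decfam_goodfam[OF d a]) (use C on in auto)
  have P: "Pf \<Phi> m = delta m" for m
    by (rule G1[OF gf]) (use co P3 in simp)
  have E: "\<exists>E. \<forall>n. hop V0 (\<Phi> l) n = E * \<Phi> l n" if "\<Phi> l \<noteq> (\<lambda>_. 0)" for l
    using eig P2'[OF that] by (auto simp: is_eigenfunction_def)
  show ?thesis unfolding lfam_def using d on P E by blast
qed

lemma I2:
  fixes V0 :: "('d::finite \<Rightarrow> int) \<Rightarrow> real"
  assumes lf: "lfam a C N V0 \<Phi>"
  shows "lfam a C N (\<lambda>n. V0 (n + s)) (\<lambda>l n. \<Phi> (fst l + s, snd l) (n + s))"
proof -
  define \<tau> where "\<tau> = (\<lambda>l::('d \<Rightarrow> int) \<times> nat. (fst l + s, snd l))"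
  define \<psi> where "\<psi> = (\<lambda>l n. \<Phi> (fst l + s, snd l) (n + s))"
  have d: "decfam a C N \<Phi>" and on: "\<And>l l'. l2_inner (\<Phi> l) (\<Phi> l') = (if l = l' \<and> \<Phi> l \<noteq> (\<lambda>_. 0) then 1 else 0)"
    and P: "\<And>m. Pf \<Phi> m = delta m"
    and E: "\<And>l. \<Phi> l \<noteq> (\<lambda>_. 0) \<Longrightarrow> \<exists>E. \<forall>n. hop V0 (\<Phi> l) n = E * \<Phi> l n"
    using lf unfolding lfam_def by blast+
  have psi: "\<psi> l n = \<Phi> (\<tau> l) (n + s)" for l n unfolding \<psi>_def \<tau>_def ..
  have nz: "\<psi> l = (\<lambda>_. 0) \<longleftrightarrow> \<Phi> (\<tau> l) = (\<lambda>_. 0)" for l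
  proof
    assume "\<psi> l = (\<lambda>_. 0)"
    hence "\<Phi> (\<tau> l) ((n - s) + s) = 0" for n using psi[of l "n - s"] by (metis)
    thus "\<Phi> (\<tau> l) = (\<lambda>_. 0)" by (simp add: fun_eq_iff)
  qed (simp add: psi fun_eq_iff)
  have tinj: "\<tau> l = \<tau> l' \<longleftrightarrow> l = l'" for l l' unfolding \<tau>_def by (auto simp: prod_eq_iff)
  have dd: "decfam a C N \<psi>"
    unfolding decfam_def
  proof (intro conjI allI impI)
    fix z j n
    have "cmod (\<Phi> (z + s, j) (n + s)) \<le> C * ew a ((n + s) - (z + s))"
      using d unfolding decfam_def by blast
    moreover have "(n + s) - (z + s) = n - z" by simp
    ultimately show "cmod (\<psi> (z, j) n) \<le> C * ew a (n - z)" unfolding \<psi>_def by simp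
  next
    fix z j assume "N \<le> j"
    thus "\<psi> (z, j) = (\<lambda>_. 0)" using d unfolding decfam_def \<psi>_def by (simp add: fun_eq_iff)
  qed
  have inner: "l2_inner (\<psi> l) (\<psi> l') = l2_inner (\<Phi> (\<tau> l)) (\<Phi> (\<tau> l'))" for l l'
    unfolding l2_inner_def psi
    by (rule infsum_reindex_bij_betw[OF bij_shift'[of s], where f = "\<lambda>n. \<Phi> (\<tau> l) n * cnj (\<Phi> (\<tau> l') n)"])
  have don: "l2_inner (\<psi> l) (\<psi> l') = (if l = l' \<and> \<psi> l \<noteq> (\<lambda>_. 0) then 1 else 0)" for l l'
    unfolding inner on by (simp add: tinj nz)
  have bt: "bij_betw \<tau> UNIV UNIV"
    unfolding \<tau>_def by (rule bij_betwI[of _ _ _ "\<lambda>l. (fst l - s, snd l)"]) auto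
  have dP: "Pf \<psi> m = delta m" for m
  proof
    fix n
    have "Pf \<psi> m n = (\<Sum>\<^sub>\<infinity>l. cnj (\<Phi> (\<tau> l) (m + s)) * \<Phi> (\<tau> l) (n + s))"
      unfolding Pf_def psi ..
    also have "\<dots> = (\<Sum>\<^sub>\<infinity>l. cnj (\<Phi> l (m + s)) * \<Phi> l (n + s))"
      by (rule infsum_reindex_bij_betw[OF bt, where f = "\<lambda>l. cnj (\<Phi> l (m + s)) * \<Phi> l (n + s)"])
    also have "\<dots> = Pf \<Phi> (m + s) (n + s)" unfolding Pf_def ..
    also have "\<dots> = delta m n" unfolding P by (simp add: delta_def)
    finally show "Pf \<psi> m n = delta m n" .
  qed
  have dE: "\<exists>E. \<forall>n. hop (\<lambda>n. V0 (n + s)) (\<psi> l) n = E * \<psi> l n" if nzl: "\<psi> l \<noteq> (\<lambda>_. 0)" for l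
  proof -
    obtain E where E: "\<And>n. hop V0 (\<Phi> (\<tau> l)) n = E * \<Phi> (\<tau> l) n" using E[of "\<tau> l"] nzl nz by blast
    have "hop (\<lambda>n. V0 (n + s)) (\<psi> l) n = E * \<psi> l n" for n
    proof -
      have "hop (\<lambda>n. V0 (n + s)) (\<psi> l) n = hop (\<lambda>n. V0 (n + s)) (\<lambda>n. \<Phi> (\<tau> l) (n + s)) n"
        by (rule arg_cong[where f = "\<lambda>u. hop (\<lambda>n. V0 (n + s)) u n"]) (simp add: fun_eq_iff psi)
      also have "\<dots> = hop V0 (\<Phi> (\<tau> l)) (n + s)" by (rule hop_shift)
      also have "\<dots> = E * \<psi> l n" by (simp add: E psi)
      finally show ?thesis .
    qed
    thus ?thesis by blast
  qed
  show ?thesis unfolding lfam_def \<psi>_def[symmetric] using dd don dP dE by blast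
qed


lemma I3:
  fixes W :: "nat \<Rightarrow> ('d::finite \<Rightarrow> int) \<Rightarrow> real" and V :: "('d \<Rightarrow> int) \<Rightarrow> real"
    and \<psi> :: "nat \<Rightarrow> ('d \<Rightarrow> int) \<times> nat \<Rightarrow> ('d \<Rightarrow> int) \<Rightarrow> complex"
  assumes a: "0 < a" and C: "0 < C"
    and lf: "\<And>k. lfam a C N (W k) (\<psi> k)"
    and WV: "\<And>n. (\<lambda>k. W k n) \<longlonglongrightarrow> V n"
  shows "ULE_with a C (hop V)"
proof -
  have dk: "decfam a C N (\<psi> k)" for k using lf unfolding lfam_def by blast
  have onk: "l2_inner (\<psi> k l) (\<psi> k l') = (if l = l' \<and> \<psi> k l \<noteq> (\<lambda>_. 0) then 1 else 0)" for k l l'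
    using lf unfolding lfam_def by blast
  have Pk: "Pf (\<psi> k) m = delta m" for k m using lf unfolding lfam_def by blast
  have Ek: "\<exists>E. \<forall>n. hop (W k) (\<psi> k l) n = E * \<psi> k l n" if "\<psi> k l \<noteq> (\<lambda>_. 0)" for k l
    using lf that unfolding lfam_def by blast
  have bC: "cmod (\<psi> k l n) \<le> C" for k l n by (rule decfam_C[OF dk]) (use a in simp)
  define x where "x k = (\<lambda>(l, n). \<psi> k l n)" for k
  have "cmod (x k i) \<le> C" for k i unfolding x_def using bC by (auto split: prod.splits)
  then obtain r y where r: "strict_mono r" and xy: "\<And>i. (\<lambda>k. x (r k) i) \<longlonglongrightarrow> y i"
    using pointwise_subseq by blast
  define \<phi> where "\<phi> l n = y (l, n)" for l n
  have cv: "(\<lambda>k. \<psi> (r k) l n) \<longlonglongrightarrow> \<phi> l n" for l n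
    using xy[of "(l, n)"] unfolding x_def \<phi>_def by simp
  have WV': "(\<lambda>k. W (r k) n) \<longlonglongrightarrow> V n" for n
    using LIMSEQ_subseq_LIMSEQ[OF WV r] by (simp add: o_def)
  have dphi: "decfam a C N \<phi>"
    unfolding decfam_def
  proof (intro conjI allI impI)
    fix z j n
    show "cmod (\<phi> (z, j) n) \<le> C * ew a (n - z)"
      by (rule lim_norm_le[OF cv]) (use dk in \<open>simp add: decfam_def\<close>)
  next
    fix z j assume j: "N \<le> j"
    show "\<phi> (z, j) = (\<lambda>_. 0)"
    proof
      fix n
      have "(\<lambda>k. \<psi> (r k) (z, j) n) = (\<lambda>k. 0)" using dk j by (simp add: decfam_def)
      hence "(\<lambda>k. 0) \<longlonglongrightarrow> \<phi> (z, j) n" using cv[of "(z, j)" n] by simp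
      thus "\<phi> (z, j) n = 0" by (rule LIMSEQ_unique[OF tendsto_const, symmetric])
    qed
  qed
  have evnz: "\<exists>n0. \<phi> l n0 \<noteq> 0 \<and> eventually (\<lambda>k. \<psi> (r k) l n0 \<noteq> 0) sequentially"
    if nzl: "\<phi> l \<noteq> (\<lambda>_. 0)" for l
  proof -
    obtain n0 where n0: "\<phi> l n0 \<noteq> 0" using nzl by (auto simp: fun_eq_iff)
    have "eventually (\<lambda>k. \<psi> (r k) l n0 \<noteq> 0) sequentially"
      by (rule tendsto_imp_eventually_ne[OF cv n0])
    thus ?thesis using n0 by blast
  qed
  have inner_lim: "(\<lambda>k. l2_inner (\<psi> (r k) l) (\<psi> (r k) l')) \<longlonglongrightarrow> l2_inner (\<phi> l) (\<phi> l')" for l l'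
    unfolding l2_inner_def
  proof (rule dom_conv)
    show "(\<lambda>n. C * ew a (n - fst l) * C) summable_on UNIV"
      by (intro summable_on_cmult_left summable_on_cmult_right ew_shift_summable a)
    fix k n
    have h1: "cmod (\<psi> (r k) l n) \<le> C * ew a (n - fst l)"
      using dk[of "r k"] unfolding decfam_def by (metis prod.collapse)
    have "cmod (\<psi> (r k) l n) * cmod (\<psi> (r k) l' n) \<le> C * ew a (n - fst l) * C"
      by (rule mult_mono[OF h1 bC[of "r k" l' n]]) (use C ew_pos[of a "n - fst l"] in auto)
    thus "cmod (\<psi> (r k) l n * cnj (\<psi> (r k) l' n)) \<le> C * ew a (n - fst l) * C"
      by (simp add: norm_mult)
  next
    fix n show "(\<lambda>k. \<psi> (r k) l n * cnj (\<psi> (r k) l' n)) \<longlonglongrightarrow> \<phi> l n * cnj (\<phi> l' n)"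
      by (intro tendsto_intros cv)
  qed
  have onphi: "l2_inner (\<phi> l) (\<phi> l') = (if l = l' \<and> \<phi> l \<noteq> (\<lambda>_. 0) then 1 else 0)" for l l'
  proof (cases "l = l'")
    case False
    hence "(\<lambda>k. l2_inner (\<psi> (r k) l) (\<psi> (r k) l')) = (\<lambda>k. 0)" by (simp add: onk)
    thus ?thesis using inner_lim[of l l'] False LIMSEQ_unique[OF tendsto_const] by fastforce
  next
    case True
    show ?thesis
    proof (cases "\<phi> l = (\<lambda>_. 0)")
      case True2: True thus ?thesis by (simp add: l2_inner_zero_left)
    next
      case False
      obtain n0 where n0: "eventually (\<lambda>k. \<psi> (r k) l n0 \<noteq> 0) sequentially" using evnz[OF False] by blast
      have "eventually (\<lambda>k. l2_inner (\<psi> (r k) l) (\<psi> (r k) l') = 1) sequentially"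
        using n0 by eventually_elim (auto simp: onk True)
      hence "(\<lambda>k. l2_inner (\<psi> (r k) l) (\<psi> (r k) l')) \<longlonglongrightarrow> 1"
        by (rule tendsto_eventually)
      hence "l2_inner (\<phi> l) (\<phi> l') = 1" using inner_lim[of l l'] LIMSEQ_unique by blast
      thus ?thesis using True False by simp
    qed
  qed
  have gf: "goodfam \<phi> (C * infsum (ew a) (UNIV::('d \<Rightarrow> int) set))"
    by (rule decfam_goodfam[OF dphi a]) (use C onphi in auto)
  have Pphi: "Pf \<phi> m = delta m" for m
  proof
    fix n
    have "(\<lambda>k. Pf (\<psi> (r k)) m n) \<longlonglongrightarrow> Pf \<phi> m n"
      unfolding Pf_def
    proof (rule dom_conv)
      show "(\<lambda>l. gdom a C N m l * C) summable_on UNIV"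
        by (intro summable_on_cmult_left gdom_summable a) (use C in simp)
      fix k l
      have "cmod (\<psi> (r k) l m) * cmod (\<psi> (r k) l n) \<le> gdom a C N m l * C"
        by (rule mult_mono[OF decfam_dom[OF dk] bC])
           (use order_trans[OF norm_ge_zero decfam_dom[OF dk]] in auto)
      thus "cmod (cnj (\<psi> (r k) l m) * \<psi> (r k) l n) \<le> gdom a C N m l * C"
        by (simp add: norm_mult)
    next
      fix l show "(\<lambda>k. cnj (\<psi> (r k) l m) * \<psi> (r k) l n) \<longlonglongrightarrow> cnj (\<phi> l m) * \<phi> l n"
        by (intro tendsto_intros cv)
    qed
    moreover have "(\<lambda>k. Pf (\<psi> (r k)) m n) = (\<lambda>k. delta m n)" by (simp add: Pk)
    ultimately show "Pf \<phi> m n = delta m n" using LIMSEQ_unique[OF tendsto_const] by metis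
  qed
  have co: "complete_orthonormal {\<phi> l | l. \<phi> l \<noteq> (\<lambda>_. 0)}" by (rule G2[OF gf Pphi])
  have eig: "is_eigenfunction (hop V) (\<phi> l)" if nzl: "\<phi> l \<noteq> (\<lambda>_. 0)" for l
  proof -
    obtain n0 where n0: "\<phi> l n0 \<noteq> 0" and ev: "eventually (\<lambda>k. \<psi> (r k) l n0 \<noteq> 0) sequentially"
      using evnz[OF nzl] by blast
    define H where "H k n = hop (W (r k)) (\<psi> (r k) l) n" for k n
    have Hc: "(\<lambda>k. H k n) \<longlonglongrightarrow> hop V (\<phi> l) n" for n
      unfolding H_def by (rule tendsto_hop[OF WV' cv])
    define E where "E = hop V (\<phi> l) n0 / \<phi> l n0"
    have "hop V (\<phi> l) n = E * \<phi> l n" for n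
    proof -
      have ev2: "eventually (\<lambda>k. H k n = H k n0 / \<psi> (r k) l n0 * \<psi> (r k) l n) sequentially"
        using ev
      proof eventually_elim
        case (elim k)
        hence "\<psi> (r k) l \<noteq> (\<lambda>_. 0)" by auto
        then obtain E' where E': "\<And>n. H k n = E' * \<psi> (r k) l n" using Ek unfolding H_def by blast
        show ?case using elim by (simp add: E')
      qed
      have "(\<lambda>k. H k n0 / \<psi> (r k) l n0 * \<psi> (r k) l n) \<longlonglongrightarrow> E * \<phi> l n"
        unfolding E_def by (intro tendsto_intros Hc cv n0)
      hence "(\<lambda>k. H k n) \<longlonglongrightarrow> E * \<phi> l n"
        by (rule Lim_transform_eventually) (rule eventually_mono[OF ev2], simp)
      thus ?thesis using Hc[of n] LIMSEQ_unique by blast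
    qed
    moreover have "l2 (\<phi> l)" using gf unfolding goodfam_def by blast
    ultimately show ?thesis using nzl unfolding is_eigenfunction_def by blast
  qed
  define c where "c u = fst (SOME l. \<phi> l = u)" for u
  have dec: "cmod (u m) \<le> C * exp (- a * znorm (m - c u))" if "u \<in> {\<phi> l | l. \<phi> l \<noteq> (\<lambda>_. 0)}" for u m
  proof -
    have "\<exists>l. \<phi> l = u" using that by auto
    hence u: "\<phi> (SOME l. \<phi> l = u) = u" by (rule someI_ex)
    have "cmod (\<phi> (SOME l. \<phi> l = u) m) \<le> C * ew a (m - fst (SOME l. \<phi> l = u))"
      using dphi unfolding decfam_def by (metis prod.collapse)
    thus ?thesis unfolding u c_def ew_def .
  qed
  show ?thesis unfolding ULE_with_def
    by (rule exI[of _ "{\<phi> l | l. \<phi> l \<noteq> (\<lambda>_. 0)}"], rule exI[of _ c]) (use co eig dec in blast)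
qed



theorem theorem1p1:
  fixes T :: "'d::finite \<Rightarrow> 'a::topological_space \<Rightarrow> 'a"
    and f :: "'a \<Rightarrow> real" and \<omega>\<^sub>0 :: 'a
  assumes homeo: "\<And>i. \<exists>g. homeomorphism UNIV UNIV (T i) g"
    and comm: "\<And>i j. T i \<circ> T j = T j \<circ> T i"
    and minimal: "minimal_action T"
    and cont: "continuous_on UNIV f"
    and ule: "has_ULE (schr_op f T \<omega>\<^sub>0)"
  shows "\<exists>\<alpha>>0. \<exists>C>0. \<forall>\<omega>. ULE_with \<alpha> C (schr_op f T \<omega>)"
proof -
  obtain a C where a: "0 < a" and C: "0 < C" and u0: "ULE_with a C (schr_op f T \<omega>\<^sub>0)"
    using ule unfolding has_ULE_def by blast
  have ts: "tsys T" by (rule tsys_from_homeo[OF homeo comm])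
  define V0 where "V0 = (\<lambda>n. f (Tpow T n \<omega>\<^sub>0))"
  have u0': "ULE_with a C (hop V0)" using u0 unfolding schr_op_hop V0_def .
  obtain N \<Phi> where lf: "lfam a C N V0 \<Phi>" using I1[OF a C u0'] by blast
  have "ULE_with a C (schr_op f T \<omega>)" for \<omega>
  proof -
    obtain s where s: "\<And>n. (\<lambda>k. f (Tpow T (n + s k) \<omega>\<^sub>0)) \<longlonglongrightarrow> f (Tpow T n \<omega>)"
      using approx[OF ts minimal cont] by blast
    have lfk: "lfam a C N (\<lambda>n. V0 (n + s k)) (\<lambda>l n. \<Phi> (fst l + s k, snd l) (n + s k))" for k
      by (rule I2[OF lf])
    have "ULE_with a C (hop (\<lambda>n. f (Tpow T n \<omega>)))"
      by (rule I3[OF a C lfk]) (use s in \<open>simp add: V0_def\<close>)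
    thus ?thesis unfolding schr_op_hop .
  qed
  thus ?thesis using a C by blast
qed

end
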